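(* Let $M$ be a $\lambda$-term and $\vec x=\langle x_1,\dots,x_n\rangle$ a list of distinct variables with $FV(M)\subseteq\vec x$. There is a natural isomorphism of functors $((SD)^n)^{o}\times D\to\mathrm{Set}$ \[\llbracket M\rrbracket_{\vec x}\cong T_D(M)_{\vec x}.\]
   Context: $[n]=\{1,\dots,n\}$. Fix a class $\mathcal C$ of functions between finite ordinals equal to one of: all bijections, all injections, all surjections, all functions. For a small category $X$, $SX$ is the category whose objects are finite lists of objects of $X$ and whose morphisms $\langle x_1,\dots,x_n\rangle\to\langle y_1,\dots,y_m\rangle$ are $\langle\alpha,f_1,\dots,f_m\rangle$ with $\alpha:[m]\to[n]$ in $\mathcal C$, $f_i:x_{\alpha(i)}\to y_i$; composite of $\langle\alpha,\vec f\rangle$ then $\langle\beta,\vec g\rangle$ is $\langle\alpha\circ\beta,(g_i\circ f_{\beta(i)})_i\rangle$; tensor $\oplus$ is concatenation, unit $\langle\rangle$. Types: fix a small category $A$. $D=D_A$ is the colimit of $D_0=A$, $D_{k+1}=(SD_k)^{o}\times D_k\sqcup A$ along the canonical inclusions. Concretely its objects are $a::=o\mid\langle a_1,\dots,a_k\rangle\Rightarrow a$ ($o\in\mathrm{Ob}(A)$); its morphisms are those of $A$ between atoms, and $\langle\alpha,\vec f\rangle\Rightarrow f:(\vec a\Rightarrow a)\to(\vec a'\Rightarrow a')$ for $\langle\alpha,\vec f\rangle:\vec a'\to\vec a$ in $SD$ and $f:a\to a'$ in $D$ (composed componentwise); no others. $SD:=S(D_A)$. Contexts are objects $\Delta=\langle\vec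 a_1,\dots,\vec a_n\rangle$ of $(SD)^n$, written $x_1:\vec a_1,\dots,x_n:\vec a_n$; $\Gamma\otimes\Delta$ is componentwise concatenation; $\Delta\oplus\langle\vec a\rangle$ appends a component. For contexts $\Gamma_1,\dots,\Gamma_k$ and $\alpha:[k']\to[k]$ in $\mathcal C$, $\alpha^{\star}:\bigotimes_{i=1}^k\Gamma_i\to\bigotimes_{j=1}^{k'}\Gamma_{\alpha(j)}$ is, componentwise, the morphism $\langle\bar\alpha,\text{identities}\rangle$ where $\bar\alpha$ sends the $p$-th position of the $j$-th block (a copy of the block of $\Gamma_{\alpha(j)}$) to the $p$-th position of the $\alpha(j)$-th block. Denotation: for $FV(M)\subseteq\vec x$, $\llbracket M\rrbracket_{\vec x}:((SD)^n)^{o}\times D\to\mathrm{Set}$ is defined by induction (functorial action induced by hom-functors and universal property of coends; in the abstraction case a morphism $\langle\alpha,\vec f\rangle\Rightarrow f$ acts as $\llbracket M\rrbracket(1_\Delta\oplus\langle\alpha,\vec f\rangle,f)$): $\llbracket x_i\rrbracket_{\vec x}(\Delta,a)=(SD)^n(\Delta,\langle\langle\rangle,\dots,\langle a\rangle,\dots,\langle\rangle\rangle)$ ($\langle a\rangle$ in position $i$); $\llbracket\lambda x.M\rrbracket_{\vec x}(\Delta,a)=\llbracket M\rrbracket_{\vec x\oplus\langle x\rangle}(\Delta\oplus\langle\vec a'\rangle,a')$ if $a=\vec a'\Rightarrow a'$ and $\emptyset$ if $a$ is atomic; \[\llbracket MN\rrbracket_{\vec x}(\Delta,a)=\int^{\vec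 a=\langle a_1,\dots,a_k\rangle\in SD}\int^{\Gamma_0,\dots,\Gamma_k\in(SD)^n}\llbracket M\rrbracket_{\vec x}(\Gamma_0,\vec a\Rightarrow a)\times\prod_{i=1}^k\llbracket N\rrbracket_{\vec x}(\Gamma_i,a_i)\times(SD)^n\Big(\Delta,\bigotimes_{i=0}^k\Gamma_i\Big).\] Type system $E^S_A$ (judgments $\Delta\vdash M:a$, $\Delta\in(SD)^n$, $a\in D$; derivations record the morphisms used): (Var) from morphisms $f_j:\vec a_j\to\langle\rangle$ ($j\neq i$) and $f_i:\vec a_i\to\langle a\rangle$ in $SD$ infer $x_1:\vec a_1,\dots,x_n:\vec a_n\vdash x_i:a$; (Abs) from $\Delta,x:\vec a\vdash M:a$ infer $\Delta\vdash\lambda x.M:\vec a\Rightarrow a$; (App) from $\Gamma_0\vdash M:\langle a_1,\dots,a_k\rangle\Rightarrow a$, $\Gamma_i\vdash N:a_i$ ($1\le i\le k$) and a morphism $\eta:\Delta\to\bigotimes_{i=0}^k\Gamma_i$ in $(SD)^n$ infer $\Delta\vdash MN:a$. Right action of $\eta=\langle g_1,\dots,g_n\rangle:\Delta'\to\Delta$ on a derivation $\pi$ of $\Delta\vdash M:a$, giving $\pi\{\eta\}$ of $\Delta'\vdash M:a$: on Var replace each $f_j$ by $f_j\circ g_j$; on Abs apply $\{\eta\oplus\langle 1\rangle\}$ to the premise; on App replace the morphism $\theta$ by $\theta\circ\eta$. Left action of $g:a\to b$ in $D$, giving $[g]\pi$ of $\Delta\vdash M:b$: on Var replace $f_i$ by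 $\langle g\rangle\circ f_i$; on Abs with $g=\langle\alpha,\vec g\rangle\Rightarrow g'$ ($\langle\alpha,\vec g\rangle:\vec b\to\vec a$) the premise becomes $([g']\pi)\{1_\Delta\oplus\langle\alpha,\vec g\rangle\}$; on App apply $[1\Rightarrow g]$ to the premise for $M$. Congruence $\sim$: the smallest equivalence relation compatible with the typing rules and containing: (i) for $\langle\alpha,f_1,\dots,f_{k'}\rangle:\vec a=\langle a_1,\dots,a_k\rangle\to\vec b=\langle b_1,\dots,b_{k'}\rangle$ in $SD$, the App-derivation with premises $\pi_0$ of $\Gamma_0\vdash M:\vec b\Rightarrow a$, $[f_i]\pi_{\alpha(i)}$ of $\Gamma_{\alpha(i)}\vdash N:b_i$ ($1\le i\le k'$) and morphism $(1\otimes\alpha^{\star})\circ\eta$ is equivalent to the App-derivation with premises $[\langle\alpha,\vec f\rangle\Rightarrow 1]\pi_0$ of $\Gamma_0\vdash M:\vec a\Rightarrow a$, $\pi_i$ of $\Gamma_i\vdash N:a_i$ ($1\le i\le k$) and morphism $\eta:\Delta\to\bigotimes_{j=0}^k\Gamma_j$; (ii) for $\theta_j:\Gamma_j\to\Gamma'_j$, the App-derivation with premises $\pi_0\{\theta_0\},\pi_i\{\theta_i\}$ and morphism $\eta:\Delta\to\bigotimes\Gamma_j$ is equivalent to the one with premises $\pi_0,\pi_i$ (contexts $\Gamma'_j$) and morphism $(\bigotimes_j\theta_j)\circ\eta$. $T_D(M)_{\vec x}(\Delta,a)$ is the set of $\sim$-classes $\tilde\pi$ of derivations $\pi$ of $\Delta\vdash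 M:a$ in $E^S_A$, and for $\eta:\Delta'\to\Delta$, $f:a\to a'$ it maps $\tilde\pi$ to the class of $[f](\pi\{\eta\})$. *)

theory Defs
  imports Main
begin

section \<open>Small categories (the parameter A)\<close>

text \<open>Comp A g f is the composite "g after f".\<close>
record ('o,'m) cat =
  Ob :: "'o set"
  Mor :: "'m set"
  Dom :: "'m \<Rightarrow> 'o"
  Cod :: "'m \<Rightarrow> 'o"
  Comp :: "'m \<Rightarrow> 'm \<Rightarrow> 'm"
  Idm :: "'o \<Rightarrow> 'm"

definition is_cat :: "('o,'m,'z) cat_scheme \<Rightarrow> bool" where
  "is_cat A \<longleftrightarrow>
     (\<forall>f\<in>Mor A. Dom A f \<in> Ob A \<and> Cod A f \<in> Ob A) \<and>
     (\<forall>c\<in>Ob A. Idm A c \<in> Mor A \<and> Dom A (Idm A c) = c \<and> Cod A (Idm A c) = c) \<and>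
     (\<forall>f\<in>Mor A. \<forall>g\<in>Mor A. Cod A f = Dom A g \<longrightarrow>
        Comp A g f \<in> Mor A \<and> Dom A (Comp A g f) = Dom A f \<and> Cod A (Comp A g f) = Cod A g) \<and>
     (\<forall>f\<in>Mor A. Comp A f (Idm A (Dom A f)) = f \<and> Comp A (Idm A (Cod A f)) f = f) \<and>
     (\<forall>f\<in>Mor A. \<forall>g\<in>Mor A. \<forall>h\<in>Mor A. Cod A f = Dom A g \<longrightarrow> Cod A g = Dom A h \<longrightarrow>
        Comp A h (Comp A g f) = Comp A (Comp A h g) f)"

section \<open>The class C of maps between finite ordinals\<close>

text \<open>A map alpha : [m] \<rightarrow> [n] is represented (0-indexed) by the list of its values,
  of length m; the codomain size n is given separately.\<close>
datatype cls = Bij | Inj | Surj | AllFun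

fun inC :: "cls \<Rightarrow> nat \<Rightarrow> nat list \<Rightarrow> bool" where
  "inC Bij n \<alpha> = (distinct \<alpha> \<and> set \<alpha> = {..<n})"
| "inC Inj n \<alpha> = (distinct \<alpha> \<and> set \<alpha> \<subseteq> {..<n})"
| "inC Surj n \<alpha> = (set \<alpha> = {..<n})"
| "inC AllFun n \<alpha> = (set \<alpha> \<subseteq> {..<n})"

section \<open>The category D and SD\<close>

datatype 'o ty = At 'o | Arr "'o ty list" "'o ty"

text \<open>Morphisms of D.  ArrM k alpha fs g : (as \<Rightarrow> a) \<rightarrow> (as' \<Rightarrow> a') where
  (k, alpha, fs) : as' \<rightarrow> as in SD (k = length as') and g : a \<rightarrow> a'.\<close>
datatype 'm tm = AtM 'm | ArrM nat "nat list" "'m tm list" "'m tm"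

text \<open>A morphism of SD: (k, alpha, fs) : as \<rightarrow> bs with k = length as,
  alpha : [length bs] \<rightarrow> [k], fs ! i : as ! (alpha ! i) \<rightarrow> bs ! i.\<close>
type_synonym 'm smor = "nat \<times> nat list \<times> 'm tm list"
type_synonym 'o ctx = "'o ty list list"

fun dobj :: "('o,'m,'z) cat_scheme \<Rightarrow> 'o ty \<Rightarrow> bool" where
  "dobj A (At c) = (c \<in> Ob A)"
| "dobj A (Arr as a) = ((\<forall>b\<in>set as. dobj A b) \<and> dobj A a)"

definition sobj :: "('o,'m,'z) cat_scheme \<Rightarrow> 'o ty list \<Rightarrow> bool" where
  "sobj A as \<longleftrightarrow> (\<forall>b\<in>set as. dobj A b)"

definition cobj :: "('o,'m,'z) cat_scheme \<Rightarrow> nat \<Rightarrow> 'o ctx \<Rightarrow> bool" where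
  "cobj A n \<Delta> \<longleftrightarrow> length \<Delta> = n \<and> (\<forall>as\<in>set \<Delta>. sobj A as)"

inductive dmor :: "('o,'m,'z) cat_scheme \<Rightarrow> cls \<Rightarrow> 'm tm \<Rightarrow> 'o ty \<Rightarrow> 'o ty \<Rightarrow> bool"
  for A C where
  dmor_At: "m \<in> Mor A \<Longrightarrow> Dom A m = c \<Longrightarrow> Cod A m = c' \<Longrightarrow> dmor A C (AtM m) (At c) (At c')"
| dmor_Arr: "sobj A as \<Longrightarrow> sobj A as' \<Longrightarrow> k = length as' \<Longrightarrow> length \<alpha> = length as \<Longrightarrow>
    length fs = length as \<Longrightarrow> inC C k \<alpha> \<Longrightarrow>
    (\<forall>i<length as. \<alpha> ! i < k \<and> dmor A C (fs ! i) (as' ! (\<alpha> ! i)) (as ! i)) \<Longrightarrow>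
    dmor A C g a a' \<Longrightarrow> dmor A C (ArrM k \<alpha> fs g) (Arr as a) (Arr as' a')"

definition smor :: "('o,'m,'z) cat_scheme \<Rightarrow> cls \<Rightarrow> 'm smor \<Rightarrow> 'o ty list \<Rightarrow> 'o ty list \<Rightarrow> bool" where
  "smor A C \<phi> as bs \<longleftrightarrow> (case \<phi> of (k, \<alpha>, fs) \<Rightarrow>
     sobj A as \<and> sobj A bs \<and> k = length as \<and> length \<alpha> = length bs \<and> length fs = length bs \<and>
     inC C k \<alpha> \<and> (\<forall>i<length bs. \<alpha> ! i < k \<and> dmor A C (fs ! i) (as ! (\<alpha> ! i)) (bs ! i)))"

definition cmor :: "('o,'m,'z) cat_scheme \<Rightarrow> cls \<Rightarrow> 'm smor list \<Rightarrow> 'o ctx \<Rightarrow> 'o ctx \<Rightarrow> bool" where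
  "cmor A C \<eta> \<Delta> \<Gamma> \<longleftrightarrow> length \<eta> = length \<Delta> \<and> length \<Gamma> = length \<Delta> \<and>
     (\<forall>j<length \<Delta>. smor A C (\<eta> ! j) (\<Delta> ! j) (\<Gamma> ! j))"

fun did :: "('o,'m,'z) cat_scheme \<Rightarrow> 'o ty \<Rightarrow> 'm tm" where
  "did A (At c) = AtM (Idm A c)"
| "did A (Arr as a) = ArrM (length as) [0..<length as] (map (did A) as) (did A a)"

definition sid :: "('o,'m,'z) cat_scheme \<Rightarrow> 'o ty list \<Rightarrow> 'm smor" where
  "sid A as = (length as, [0..<length as], map (did A) as)"

definition cid :: "('o,'m,'z) cat_scheme \<Rightarrow> 'o ctx \<Rightarrow> 'm smor list" where
  "cid A \<Delta> = map (sid A) \<Delta>"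

text \<open>Composition in D: dcomp A g f is "g after f".\<close>
function dcomp :: "('o,'m,'z) cat_scheme \<Rightarrow> 'm tm \<Rightarrow> 'm tm \<Rightarrow> 'm tm" where
  "dcomp A (AtM g) (AtM f) = AtM (Comp A g f)"
| "dcomp A (ArrM k' \<beta> gs g0) (ArrM k \<alpha> fs f0) =
     ArrM k' (map (\<lambda>j. \<beta> ! j) \<alpha>)
       (map (\<lambda>i. if i < length fs \<and> \<alpha> ! i < length gs then dcomp A (fs ! i) (gs ! (\<alpha> ! i))
                 else undefined) [0..<length \<alpha>])
       (dcomp A g0 f0)"
| "dcomp A (AtM g) (ArrM k \<alpha> fs f0) = undefined"
| "dcomp A (ArrM k' \<beta> gs g0) (AtM f) = undefined"
  by pat_completeness auto
termination
proof (relation "measure (\<lambda>(A, g, f). size g + size f)")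
  show "wf (measure (\<lambda>(A, g, f). size g + size f))" by simp
next
  fix A :: "('o,'m,'z) cat_scheme" and k' k i :: nat and \<beta> \<alpha> :: "nat list" and gs fs :: "'m tm list" and g0 f0 :: "'m tm"
  assume h: "i \<in> set [0..<length \<alpha>]" "i < length fs \<and> \<alpha> ! i < length gs"
    have "size (fs ! i) \<le> size_list size fs"
      using h by (intro size_list_estimation') (auto simp: nth_mem)
    moreover have "size (gs ! (\<alpha> ! i)) \<le> size_list size gs"
      using h by (intro size_list_estimation') (auto simp: nth_mem)
    ultimately show "((A, fs ! i, gs ! (\<alpha> ! i)), A, ArrM k' \<beta> gs g0, ArrM k \<alpha> fs f0)
        \<in> measure (\<lambda>(A, g, f). size g + size f)" by auto
qed auto

text \<open>sthen A phi psi : "phi then psi" in SD (first phi, then psi).\<close>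
fun sthen :: "('o,'m,'z) cat_scheme \<Rightarrow> 'm smor \<Rightarrow> 'm smor \<Rightarrow> 'm smor" where
  "sthen A (k, \<alpha>, fs) (m, \<beta>, gs) =
     (k, map (\<lambda>j. \<alpha> ! j) \<beta>, map (\<lambda>i. dcomp A (gs ! i) (fs ! (\<beta> ! i))) [0..<length \<beta>])"

text \<open>cthen A eta theta : "eta then theta" in (SD)^n (i.e. theta \<circ> eta).\<close>
definition cthen :: "('o,'m,'z) cat_scheme \<Rightarrow> 'm smor list \<Rightarrow> 'm smor list \<Rightarrow> 'm smor list" where
  "cthen A \<eta> \<theta> = map2 (sthen A) \<eta> \<theta>"

text \<open>Tensor (concatenation) of SD-morphisms and of contexts/context morphisms.\<close>
fun stensor :: "'m smor \<Rightarrow> 'm smor \<Rightarrow> 'm smor" where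
  "stensor (k1, \<alpha>1, f1) (k2, \<alpha>2, f2) = (k1 + k2, \<alpha>1 @ map (\<lambda>i. i + k1) \<alpha>2, f1 @ f2)"

definition ctensor :: "nat \<Rightarrow> 'o ctx list \<Rightarrow> 'o ctx" where
  "ctensor n \<Gamma>s = map (\<lambda>p. concat (map (\<lambda>\<Gamma>. \<Gamma> ! p) \<Gamma>s)) [0..<n]"

definition cmtensor :: "nat \<Rightarrow> 'm smor list list \<Rightarrow> 'm smor list" where
  "cmtensor n \<theta>s = map (\<lambda>p. foldr stensor (map (\<lambda>\<theta>. \<theta> ! p) \<theta>s) (0, [], [])) [0..<n]"

text \<open>alpha-star : ctensor n Gs \<rightarrow> ctensor n (map (\<lambda>j. Gs ! (alpha ! j)) [0..<length alpha]).\<close>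
definition astar :: "('o,'m,'z) cat_scheme \<Rightarrow> nat \<Rightarrow> 'o ctx list \<Rightarrow> nat list \<Rightarrow> 'm smor list" where
  "astar A n \<Gamma>s \<alpha> = map (\<lambda>p.
     let blk = (\<lambda>i. (\<Gamma>s ! i) ! p);
         off = (\<lambda>i. sum_list (map (\<lambda>i'. length (blk i')) [0..<i]));
         src = concat (map blk [0..<length \<Gamma>s]);
         tgt = concat (map (\<lambda>j. blk (\<alpha> ! j)) [0..<length \<alpha>])
     in (length src,
         concat (map (\<lambda>j. map (\<lambda>q. off (\<alpha> ! j) + q) [0..<length (blk (\<alpha> ! j))]) [0..<length \<alpha>]),
         map (did A) tgt)) [0..<n]"

datatype 'v lterm = Var 'v | Lam 'v "'v lterm" | App "'v lterm" "'v lterm"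

fun FV :: "'v lterm \<Rightarrow> 'v set" where
  "FV (Var x) = {x}"
| "FV (Lam x M) = FV M - {x}"
| "FV (App M N) = FV M \<union> FV N"

text \<open>Index of a variable in the list of variables (last occurrence, so that a
  re-bound variable shadows the outer one).\<close>
definition lastidx :: "'v list \<Rightarrow> 'v \<Rightarrow> nat" where
  "lastidx xs x = (GREATEST i. i < length xs \<and> xs ! i = x)"

section \<open>The denotation [[M]]_xs as a Set-valued functor\<close>

text \<open>Elements are represented by representatives; each value of the functor is the
  quotient of a carrier by an equivalence relation (the coend quotient).
  EMor hs : an element of a hom-set (SD)^n(Delta, ...);
  EApp as Gs u vs theta : a representative (u, v_1..v_k, theta) of the coend at a-vector as
  and contexts Gs = [Gamma_0, ..., Gamma_k].\<close>
datatype ('o,'m) el = EMor "'m smor list"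
  | EApp "'o ty list" "'o ctx list" "('o,'m) el" "('o,'m) el list" "'m smor list"

definition appcar :: "('o,'m,'z) cat_scheme \<Rightarrow> cls \<Rightarrow> nat
   \<Rightarrow> ('o ctx \<Rightarrow> 'o ty \<Rightarrow> ('o,'m) el set) \<Rightarrow> ('o ctx \<Rightarrow> 'o ty \<Rightarrow> ('o,'m) el set)
   \<Rightarrow> 'o ctx \<Rightarrow> 'o ty \<Rightarrow> ('o,'m) el set" where
  "appcar A C n cM cN \<Delta> a = {EApp as \<Gamma>s u vs \<theta> | as \<Gamma>s u vs \<theta>.
     sobj A as \<and> length \<Gamma>s = Suc (length as) \<and> (\<forall>\<Gamma>\<in>set \<Gamma>s. cobj A n \<Gamma>) \<and>
     u \<in> cM (hd \<Gamma>s) (Arr as a) \<and> length vs = length as \<and>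
     (\<forall>i<length as. vs ! i \<in> cN (\<Gamma>s ! Suc i) (as ! i)) \<and>
     cmor A C \<theta> \<Delta> (ctensor n \<Gamma>s)}"

text \<open>Generating relation of the coend equivalence: componentwise equivalence of the
  factors, dinaturality in the contexts Gamma_j, and dinaturality in the a-vector.\<close>
definition appgen :: "('o,'m,'z) cat_scheme \<Rightarrow> cls \<Rightarrow> nat
   \<Rightarrow> ('o ctx \<Rightarrow> 'o ty \<Rightarrow> ('o,'m) el set) \<Rightarrow> ('o ctx \<Rightarrow> 'o ty \<Rightarrow> ('o,'m) el rel)
   \<Rightarrow> ('m smor list \<Rightarrow> 'm tm \<Rightarrow> ('o,'m) el \<Rightarrow> ('o,'m) el)
   \<Rightarrow> ('o ctx \<Rightarrow> 'o ty \<Rightarrow> ('o,'m) el set) \<Rightarrow> ('o ctx \<Rightarrow> 'o ty \<Rightarrow> ('o,'m) el rel)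
   \<Rightarrow> ('m smor list \<Rightarrow> 'm tm \<Rightarrow> ('o,'m) el \<Rightarrow> ('o,'m) el)
   \<Rightarrow> 'o ctx \<Rightarrow> 'o ty \<Rightarrow> ('o,'m) el rel" where
  "appgen A C n cM rM tM cN rN tN \<Delta> a = {(e, e'). 
     e \<in> appcar A C n cM cN \<Delta> a \<and> e' \<in> appcar A C n cM cN \<Delta> a \<and>
     ((\<exists>as \<Gamma>s u vs u' vs' \<theta>. e = EApp as \<Gamma>s u vs \<theta> \<and> e' = EApp as \<Gamma>s u' vs' \<theta> \<and>
         (u, u') \<in> rM (hd \<Gamma>s) (Arr as a) \<and> length vs' = length vs \<and>
         (\<forall>i<length vs. (vs ! i, vs' ! i) \<in> rN (\<Gamma>s ! Suc i) (as ! i)))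
    \<or> (\<exists>as \<Gamma>s \<Gamma>s' \<theta>s u vs \<eta>. length \<theta>s = length \<Gamma>s \<and> length \<Gamma>s' = length \<Gamma>s \<and>
         (\<forall>j<length \<Gamma>s. cmor A C (\<theta>s ! j) (\<Gamma>s ! j) (\<Gamma>s' ! j)) \<and>
         e = EApp as \<Gamma>s (tM (hd \<theta>s) (did A (Arr as a)) u)
               (map (\<lambda>i. tN (\<theta>s ! Suc i) (did A (as ! i)) (vs ! i)) [0..<length as]) \<eta> \<and>
         e' = EApp as \<Gamma>s' u vs (cthen A \<eta> (cmtensor n \<theta>s)))
    \<or> (\<exists>as bs k \<alpha> fs \<Gamma>s u vs \<eta>. smor A C (k, \<alpha>, fs) as bs \<and>
         e = EApp bs (hd \<Gamma>s # map (\<lambda>j. \<Gamma>s ! Suc (\<alpha> ! j)) [0..<length bs]) u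
               (map (\<lambda>j. tN (cid A (\<Gamma>s ! Suc (\<alpha> ! j))) (fs ! j) (vs ! (\<alpha> ! j))) [0..<length bs])
               (cthen A \<eta> (cmtensor n [cid A (hd \<Gamma>s), astar A n (tl \<Gamma>s) \<alpha>])) \<and>
         e' = EApp as \<Gamma>s (tM (cid A (hd \<Gamma>s)) (ArrM k \<alpha> fs (did A a)) u) vs \<eta>))}"

definition appact :: "('o,'m,'z) cat_scheme
   \<Rightarrow> ('m smor list \<Rightarrow> 'm tm \<Rightarrow> ('o,'m) el \<Rightarrow> ('o,'m) el)
   \<Rightarrow> 'm smor list \<Rightarrow> 'm tm \<Rightarrow> ('o,'m) el \<Rightarrow> ('o,'m) el" where
  "appact A tM \<eta> f e = (case e of
      EApp as \<Gamma>s u vs \<theta> \<Rightarrow>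
        EApp as \<Gamma>s (tM (cid A (hd \<Gamma>s)) (ArrM (length as) [0..<length as] (map (did A) as) f) u) vs
          (cthen A \<eta> \<theta>)
    | _ \<Rightarrow> e)"

text \<open>sem A C xs M = (carrier, equivalence, action on representatives); the action
  sem-action eta f maps the value at (Delta, a) to the value at (Delta', a') for
  eta : Delta' \<rightarrow> Delta, f : a \<rightarrow> a'.\<close>
primrec sem :: "('o,'m,'z) cat_scheme \<Rightarrow> cls \<Rightarrow> 'v list \<Rightarrow> 'v lterm \<Rightarrow>
    ('o ctx \<Rightarrow> 'o ty \<Rightarrow> ('o,'m) el set) \<times> ('o ctx \<Rightarrow> 'o ty \<Rightarrow> ('o,'m) el rel)
    \<times> ('m smor list \<Rightarrow> 'm tm \<Rightarrow> ('o,'m) el \<Rightarrow> ('o,'m) el)" where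
  "sem A C xs (Var x) =
     (let i = lastidx xs x; n = length xs;
          car = (\<lambda>\<Delta> a. {EMor hs | hs. cmor A C hs \<Delta> (map (\<lambda>j. if j = i then [a] else []) [0..<n])})
      in (car, (\<lambda>\<Delta> a. Id_on (car \<Delta> a)),
          (\<lambda>\<eta> f e. case e of
              EMor hs \<Rightarrow> EMor (map (\<lambda>j. if j = i then sthen A (sthen A (\<eta> ! j) (hs ! j)) (1, [0], [f])
                                        else sthen A (\<eta> ! j) (hs ! j)) [0..<n])
            | _ \<Rightarrow> e)))"
| "sem A C xs (Lam x M) =
     (case sem A C (xs @ [x]) M of (c, r, t) \<Rightarrow>
       ((\<lambda>\<Delta> a. case a of Arr as b \<Rightarrow> c (\<Delta> @ [as]) b | At _ \<Rightarrow> {}),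
        (\<lambda>\<Delta> a. case a of Arr as b \<Rightarrow> r (\<Delta> @ [as]) b | At _ \<Rightarrow> {}),
        (\<lambda>\<eta> f e. case f of ArrM k \<alpha> gs g \<Rightarrow> t (\<eta> @ [(k, \<alpha>, gs)]) g e | AtM _ \<Rightarrow> e)))"
| "sem A C xs (App M N) =
     (case sem A C xs M of (cM, rM, tM) \<Rightarrow> case sem A C xs N of (cN, rN, tN) \<Rightarrow>
       (appcar A C (length xs) cM cN,
        (\<lambda>\<Delta> a. Restr ((appgen A C (length xs) cM rM tM cN rN tN \<Delta> a
                   \<union> (appgen A C (length xs) cM rM tM cN rN tN \<Delta> a)\<inverse>)\<^sup>*)
                 (appcar A C (length xs) cM cN \<Delta> a)),
        appact A tM))"

text \<open>The value of [[M]]_xs at (Delta, a), as a set, and its functorial action.\<close>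
definition DQ :: "('o,'m,'z) cat_scheme \<Rightarrow> cls \<Rightarrow> 'v list \<Rightarrow> 'v lterm \<Rightarrow> 'o ctx \<Rightarrow> 'o ty
     \<Rightarrow> ('o,'m) el set set" where
  "DQ A C xs M \<Delta> a = fst (sem A C xs M) \<Delta> a // fst (snd (sem A C xs M)) \<Delta> a"

definition DQact :: "('o,'m,'z) cat_scheme \<Rightarrow> cls \<Rightarrow> 'v list \<Rightarrow> 'v lterm \<Rightarrow> 'o ctx \<Rightarrow> 'o ty
     \<Rightarrow> 'm smor list \<Rightarrow> 'm tm \<Rightarrow> ('o,'m) el set \<Rightarrow> ('o,'m) el set" where
  "DQact A C xs M \<Delta>' a' \<eta> f X =
     (\<Union>e\<in>X. fst (snd (sem A C xs M)) \<Delta>' a' `` {snd (snd (sem A C xs M)) \<eta> f e})"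

section \<open>The type system E^S_A, its derivations and T_D(M)\<close>

text \<open>Derivations record the judgement (context, type) at each node and the morphisms
  used.  DVar Delta a i hs: Var rule for x_i; DAbs; DApp Delta a pi0 pis eta.\<close>
datatype ('o,'m) dv = DVar "'o ctx" "'o ty" nat "'m smor list"
  | DAbs "'o ctx" "'o ty" "('o,'m) dv"
  | DApp "'o ctx" "'o ty" "('o,'m) dv" "('o,'m) dv list" "'m smor list"

fun dvctx :: "('o,'m) dv \<Rightarrow> 'o ctx" where
  "dvctx (DVar \<Delta> a i hs) = \<Delta>"
| "dvctx (DAbs \<Delta> a p) = \<Delta>"
| "dvctx (DApp \<Delta> a p ps h) = \<Delta>"

fun dvty :: "('o,'m) dv \<Rightarrow> 'o ty" where
  "dvty (DVar \<Delta> a i hs) = a"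
| "dvty (DAbs \<Delta> a p) = a"
| "dvty (DApp \<Delta> a p ps h) = a"

inductive deriv :: "('o,'m,'z) cat_scheme \<Rightarrow> cls \<Rightarrow> 'v list \<Rightarrow> ('o,'m) dv \<Rightarrow> 'o ctx
     \<Rightarrow> 'v lterm \<Rightarrow> 'o ty \<Rightarrow> bool" for A C where
  deriv_Var: "cobj A (length xs) \<Delta> \<Longrightarrow> dobj A a \<Longrightarrow> x \<in> set xs \<Longrightarrow> i = lastidx xs x \<Longrightarrow>
    length hs = length xs \<Longrightarrow>
    (\<forall>j<length xs. smor A C (hs ! j) (\<Delta> ! j) (if j = i then [a] else [])) \<Longrightarrow>
    deriv A C xs (DVar \<Delta> a i hs) \<Delta> (Var x) a"
| deriv_Abs: "deriv A C (xs @ [x]) p (\<Delta> @ [as]) M b \<Longrightarrow>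
    deriv A C xs (DAbs \<Delta> (Arr as b) p) \<Delta> (Lam x M) (Arr as b)"
| deriv_App: "deriv A C xs p0 \<Gamma>0 M (Arr as a) \<Longrightarrow> length ps = length as \<Longrightarrow>
    length \<Gamma>s = length as \<Longrightarrow> (\<forall>i<length as. deriv A C xs (ps ! i) (\<Gamma>s ! i) N (as ! i)) \<Longrightarrow>
    cobj A (length xs) \<Delta> \<Longrightarrow> cmor A C \<eta> \<Delta> (ctensor (length xs) (\<Gamma>0 # \<Gamma>s)) \<Longrightarrow>
    deriv A C xs (DApp \<Delta> a p0 ps \<eta>) \<Delta> (App M N) a"

text \<open>Right action  pi{eta}  (eta : Delta' \<rightarrow> Delta).\<close>
fun ract :: "('o,'m,'z) cat_scheme \<Rightarrow> 'o ctx \<Rightarrow> 'm smor list \<Rightarrow> ('o,'m) dv \<Rightarrow> ('o,'m) dv" where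
  "ract A \<Delta>' \<eta> (DVar \<Delta> a i hs) = DVar \<Delta>' a i (map2 (sthen A) \<eta> hs)"
| "ract A \<Delta>' \<eta> (DAbs \<Delta> b p) = (case b of
      Arr as _ \<Rightarrow> DAbs \<Delta>' b (ract A (\<Delta>' @ [as]) (\<eta> @ [sid A as]) p)
    | At _ \<Rightarrow> DAbs \<Delta>' b p)"
| "ract A \<Delta>' \<eta> (DApp \<Delta> a p0 ps \<theta>) = DApp \<Delta>' a p0 ps (cthen A \<eta> \<theta>)"

text \<open>Left action  [g]pi  (g : a \<rightarrow> b, b given explicitly).\<close>
fun lact :: "('o,'m,'z) cat_scheme \<Rightarrow> 'm tm \<Rightarrow> 'o ty \<Rightarrow> ('o,'m) dv \<Rightarrow> ('o,'m) dv" where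
  "lact A g b (DVar \<Delta> a i hs) = DVar \<Delta> b i (hs[i := sthen A (hs ! i) (1, [0], [g])])"
| "lact A g b (DAbs \<Delta> a p) = (case (g, b) of
      (ArrM k \<alpha> gs g', Arr bs b') \<Rightarrow>
        DAbs \<Delta> b (ract A (\<Delta> @ [bs]) (cid A \<Delta> @ [(k, \<alpha>, gs)]) (lact A g' b' p))
    | _ \<Rightarrow> DAbs \<Delta> b p)"
| "lact A g b (DApp \<Delta> a p0 ps \<theta>) = (case dvty p0 of
      Arr as _ \<Rightarrow> DApp \<Delta> b (lact A (ArrM (length as) [0..<length as] (map (did A) as) g) (Arr as b) p0) ps \<theta>
    | At _ \<Rightarrow> DApp \<Delta> b p0 ps \<theta>)"

inductive dcong :: "('o,'m,'z) cat_scheme \<Rightarrow> cls \<Rightarrow> 'v list \<Rightarrow> 'v lterm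
     \<Rightarrow> ('o,'m) dv \<Rightarrow> ('o,'m) dv \<Rightarrow> bool" for A C where
  dcong_refl: "deriv A C xs p \<Delta> M a \<Longrightarrow> dcong A C xs M p p"
| dcong_sym: "dcong A C xs M p q \<Longrightarrow> dcong A C xs M q p"
| dcong_trans: "dcong A C xs M p q \<Longrightarrow> dcong A C xs M q r \<Longrightarrow> dcong A C xs M p r"
| dcong_Abs: "dcong A C (xs @ [x]) M p q \<Longrightarrow>
    deriv A C xs (DAbs \<Delta> a p) \<Delta> (Lam x M) a \<Longrightarrow> deriv A C xs (DAbs \<Delta> a q) \<Delta> (Lam x M) a \<Longrightarrow>
    dcong A C xs (Lam x M) (DAbs \<Delta> a p) (DAbs \<Delta> a q)"
| dcong_App: "dcong A C xs M p0 q0 \<Longrightarrow> length qs = length ps \<Longrightarrow>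
    (\<forall>i<length ps. dcong A C xs N (ps ! i) (qs ! i)) \<Longrightarrow>
    deriv A C xs (DApp \<Delta> a p0 ps \<eta>) \<Delta> (App M N) a \<Longrightarrow>
    deriv A C xs (DApp \<Delta> a q0 qs \<eta>) \<Delta> (App M N) a \<Longrightarrow>
    dcong A C xs (App M N) (DApp \<Delta> a p0 ps \<eta>) (DApp \<Delta> a q0 qs \<eta>)"
| dcong_i: "smor A C (k, \<alpha>, fs) as bs \<Longrightarrow>
    lhs = DApp \<Delta> a p0
            (map (\<lambda>j. lact A (fs ! j) (bs ! j) (ps ! (\<alpha> ! j))) [0..<length bs])
            (cthen A \<eta> (cmtensor (length xs) [cid A (dvctx p0), astar A (length xs) (map dvctx ps) \<alpha>])) \<Longrightarrow>
    rhs = DApp \<Delta> a (lact A (ArrM k \<alpha> fs (did A a)) (Arr as a) p0) ps \<eta> \<Longrightarrow>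
    deriv A C xs lhs \<Delta> (App M N) a \<Longrightarrow> deriv A C xs rhs \<Delta> (App M N) a \<Longrightarrow>
    dcong A C xs (App M N) lhs rhs"
| dcong_ii: "length \<theta>s = Suc (length ps) \<Longrightarrow> length \<Gamma>s = length \<theta>s \<Longrightarrow>
    (\<forall>j<length \<theta>s. cmor A C (\<theta>s ! j) (\<Gamma>s ! j) ((dvctx p0 # map dvctx ps) ! j)) \<Longrightarrow>
    lhs = DApp \<Delta> a (ract A (\<Gamma>s ! 0) (\<theta>s ! 0) p0)
            (map (\<lambda>i. ract A (\<Gamma>s ! Suc i) (\<theta>s ! Suc i) (ps ! i)) [0..<length ps]) \<eta> \<Longrightarrow>
    rhs = DApp \<Delta> a p0 ps (cthen A \<eta> (cmtensor (length xs) \<theta>s)) \<Longrightarrow>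
    deriv A C xs lhs \<Delta> (App M N) a \<Longrightarrow> deriv A C xs rhs \<Delta> (App M N) a \<Longrightarrow>
    dcong A C xs (App M N) lhs rhs"

text \<open>T_D(M)_xs (Delta, a) and its functorial action  [f](pi{eta}).\<close>
definition TQ :: "('o,'m,'z) cat_scheme \<Rightarrow> cls \<Rightarrow> 'v list \<Rightarrow> 'v lterm \<Rightarrow> 'o ctx \<Rightarrow> 'o ty
     \<Rightarrow> ('o,'m) dv set set" where
  "TQ A C xs M \<Delta> a = {p. deriv A C xs p \<Delta> M a} // {(p, q). dcong A C xs M p q}"

definition TQact :: "('o,'m,'z) cat_scheme \<Rightarrow> cls \<Rightarrow> 'v list \<Rightarrow> 'v lterm \<Rightarrow> 'o ctx \<Rightarrow> 'o ty
     \<Rightarrow> 'm smor list \<Rightarrow> 'm tm \<Rightarrow> ('o,'m) dv set \<Rightarrow> ('o,'m) dv set" where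
  "TQact A C xs M \<Delta>' a' \<eta> f X =
     (\<Union>p\<in>X. {q. dcong A C xs M (lact A f a' (ract A \<Delta>' \<eta> p)) q})"

end

theory Submission
  imports Defs
begin

lemma inC_id: "inC C k [0..<k]"
  by (cases C) auto

lemma inC_comp:
  assumes "inC C k \<alpha>" "inC C k' \<beta>" "length \<beta> = k"
  shows "inC C k' (map ((!) \<beta>) \<alpha>)"
proof -
  have img: "(!) \<beta> ` {..<k} = set \<beta>" using assms(3) by (auto simp: in_set_conv_nth)
  show ?thesis
  proof (cases C)
    case Bij
    with assms have d: "distinct \<alpha>" "set \<alpha> = {..<k}" "distinct \<beta>" "set \<beta> = {..<k'}" by auto
    have "inj_on ((!) \<beta>) (set \<alpha>)" using d assms(3) by (auto simp: inj_on_def nth_eq_iff_index_eq)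
    then show ?thesis using Bij d img by (simp add: distinct_map)
  next
    case Inj
    with assms have d: "distinct \<alpha>" "set \<alpha> \<subseteq> {..<k}" "distinct \<beta>" "set \<beta> \<subseteq> {..<k'}" by auto
    have "inj_on ((!) \<beta>) (set \<alpha>)" using d assms(3) by (auto simp: inj_on_def nth_eq_iff_index_eq subset_iff)
    then show ?thesis using Inj d img by (auto simp: distinct_map)
  next
    case Surj
    with assms img show ?thesis by auto
  next
    case AllFun
    with assms img show ?thesis by auto
  qed
qed

lemma inC_len: "inC C k \<alpha> \<Longrightarrow> i < length \<alpha> \<Longrightarrow> \<alpha> ! i < k"
  by (cases C) (auto dest!: nth_mem)

lemma dmor_objs: "dmor A C f a b \<Longrightarrow> is_cat A \<Longrightarrow> dobj A a \<and> dobj A b"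
  by (induction rule: dmor.induct) (auto simp: is_cat_def sobj_def)

lemma did_typed: "is_cat A \<Longrightarrow> dobj A a \<Longrightarrow> dmor A C (did A a) a a"
proof (induction a)
  case (At x)
  then show ?case by (auto intro!: dmor_At simp: is_cat_def)
next
  case (Arr as a)
  show ?case
    using Arr by (auto intro!: dmor_Arr simp: sobj_def inC_id)
qed

lemma dcomp_id:
  "dmor A C f a b \<Longrightarrow> is_cat A \<Longrightarrow> dcomp A (did A b) f = f \<and> dcomp A f (did A a) = f"
proof (induction rule: dmor.induct)
  case (dmor_At m c c')
  then show ?case by (auto simp: is_cat_def)
next
  case (dmor_Arr as as' k \<alpha> fs g a a')
  have a1: "map ((!) [0..<k]) \<alpha> = \<alpha>"
    using dmor_Arr by (auto intro!: nth_equalityI)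
  have a2: "map (\<lambda>i. if i < length fs \<and> \<alpha> ! i < length (map (did A) as')
        then dcomp A (fs ! i) (map (did A) as' ! (\<alpha> ! i)) else undefined) [0..<length \<alpha>] = fs"
    using dmor_Arr by (auto intro!: nth_equalityI)
  have a3: "map (\<lambda>j. \<alpha> ! j) [0..<length as] = \<alpha>"
    using dmor_Arr by (auto intro!: nth_equalityI)
  have a4: "map (\<lambda>i. if i < length (map (did A) as) \<and> [0..<length as] ! i < length fs
        then dcomp A (map (did A) as ! i) (fs ! ([0..<length as] ! i)) else undefined) [0..<length [0..<length as]] = fs"
    using dmor_Arr by (auto intro!: nth_equalityI)
  show ?case using dmor_Arr a1 a2 a3 a4 by simp
qed

lemma dmor_ArrE:
  assumes "dmor A C g (Arr as a) c"
  obtains k \<alpha> gs g0 as' a' where "g = ArrM k \<alpha> gs g0" "c = Arr as' a'" "sobj A as" "sobj A as'"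
    "k = length as'" "length \<alpha> = length as" "length gs = length as" "inC C k \<alpha>"
    "\<forall>i<length as. \<alpha> ! i < k \<and> dmor A C (gs ! i) (as' ! (\<alpha> ! i)) (as ! i)" "dmor A C g0 a a'"
  using assms by (cases rule: dmor.cases) auto

lemma dmor_ArrE2:
  assumes "dmor A C g c (Arr as a)"
  obtains k \<alpha> gs g0 as' a' where "g = ArrM k \<alpha> gs g0" "c = Arr as' a'" "sobj A as'" "sobj A as"
    "k = length as" "length \<alpha> = length as'" "length gs = length as'" "inC C k \<alpha>"
    "\<forall>i<length as'. \<alpha> ! i < k \<and> dmor A C (gs ! i) (as ! (\<alpha> ! i)) (as' ! i)" "dmor A C g0 a' a"
  using assms by (cases rule: dmor.cases) auto

lemma dmor_AtE:
  assumes "dmor A C g (At o1) c"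
  obtains m o2 where "g = AtM m" "c = At o2" "m \<in> Mor A" "Dom A m = o1" "Cod A m = o2"
  using assms by (cases rule: dmor.cases) auto

lemma dmor_AtE2:
  assumes "dmor A C g c (At o1)"
  obtains m o2 where "g = AtM m" "c = At o2" "m \<in> Mor A" "Dom A m = o2" "Cod A m = o1"
  using assms by (cases rule: dmor.cases) auto

lemma dcomp_typed_aux:
  "dmor A C f a b \<Longrightarrow> is_cat A \<Longrightarrow>
    (\<forall>g c. dmor A C g b c \<longrightarrow> dmor A C (dcomp A g f) a c) \<and>
    (\<forall>h z. dmor A C h z a \<longrightarrow> dmor A C (dcomp A f h) z b)"
proof (induction rule: dmor.induct)
  case (dmor_At m c c')
  show ?case
  proof (intro conjI allI impI)
    fix g d assume "dmor A C g (At c') d"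
    then show "dmor A C (dcomp A g (AtM m)) (At c) d"
      using dmor_At by (elim dmor_AtE) (auto intro!: dmor.dmor_At simp: is_cat_def)
  next
    fix h z assume "dmor A C h z (At c)"
    then show "dmor A C (dcomp A (AtM m) h) z (At c')"
      using dmor_At by (elim dmor_AtE2) (auto intro!: dmor.dmor_At simp: is_cat_def)
  qed
next
  case (dmor_Arr as as' k \<alpha> fs f0 a a')
  show ?case
  proof (intro conjI allI impI)
    fix g d assume "dmor A C g (Arr as' a') d"
    then obtain k' \<beta> gs g0 as'' a'' where g: "g = ArrM k' \<beta> gs g0" "d = Arr as'' a''" "sobj A as'" "sobj A as''"
    "k' = length as''" "length \<beta> = length as'" "length gs = length as'" "inC C k' \<beta>"
    "\<forall>i<length as'. \<beta> ! i < k' \<and> dmor A C (gs ! i) (as'' ! (\<beta> ! i)) (as' ! i)" "dmor A C g0 a' a''"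
      by (rule dmor_ArrE)
    show "dmor A C (dcomp A g (ArrM k \<alpha> fs f0)) (Arr as a) d"
      unfolding g(1,2) dcomp.simps
    proof (rule dmor.dmor_Arr)
      show "inC C k' (map ((!) \<beta>) \<alpha>)" using inC_comp[of C k \<alpha> k' \<beta>] g dmor_Arr.hyps by auto
      show "\<forall>i<length as. map ((!) \<beta>) \<alpha> ! i < k' \<and>
        dmor A C ((map (\<lambda>i. if i < length fs \<and> \<alpha> ! i < length gs then dcomp A (fs ! i) (gs ! (\<alpha> ! i)) else undefined) [0..<length \<alpha>]) ! i)
          (as'' ! (map ((!) \<beta>) \<alpha> ! i)) (as ! i)"
        using dmor_Arr g by auto
      show "dmor A C (dcomp A g0 f0) a a''" using dmor_Arr g by auto
    qed (use dmor_Arr g in auto)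
  next
    fix h z assume "dmor A C h z (Arr as a)"
    then obtain k'' \<gamma> hs h0 as0 a0 where h: "h = ArrM k'' \<gamma> hs h0" "z = Arr as0 a0" "sobj A as0" "sobj A as"
    "k'' = length as" "length \<gamma> = length as0" "length hs = length as0" "inC C k'' \<gamma>"
    "\<forall>i<length as0. \<gamma> ! i < k'' \<and> dmor A C (hs ! i) (as ! (\<gamma> ! i)) (as0 ! i)" "dmor A C h0 a0 a"
      by (rule dmor_ArrE2)
    show "dmor A C (dcomp A (ArrM k \<alpha> fs f0) h) z (Arr as' a')"
      unfolding h(1,2) dcomp.simps
    proof (rule dmor.dmor_Arr)
      show "inC C k (map ((!) \<alpha>) \<gamma>)" using inC_comp[of C k'' \<gamma> k \<alpha>] h dmor_Arr.hyps by auto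
      show "\<forall>i<length as0. map ((!) \<alpha>) \<gamma> ! i < k \<and>
        dmor A C ((map (\<lambda>i. if i < length hs \<and> \<gamma> ! i < length fs then dcomp A (hs ! i) (fs ! (\<gamma> ! i)) else undefined) [0..<length \<gamma>]) ! i)
          (as' ! (map ((!) \<alpha>) \<gamma> ! i)) (as0 ! i)"
        using dmor_Arr h by auto
      show "dmor A C (dcomp A f0 h0) a0 a'" using dmor_Arr h by auto
    qed (use dmor_Arr h in auto)
  qed
qed

lemma dcomp_typed: "dmor A C f a b \<Longrightarrow> dmor A C g b c \<Longrightarrow> is_cat A \<Longrightarrow> dmor A C (dcomp A g f) a c"
  using dcomp_typed_aux by blast

lemma size_tm_nth: "i < length fs \<Longrightarrow> size (fs ! i) < size (ArrM k \<alpha> fs g)"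
proof -
  assume "i < length fs"
  then have "size (fs ! i) \<le> size_list size fs" by (intro size_list_estimation') (auto simp: nth_mem)
  then show ?thesis by simp
qed

lemma size_tm_cod: "size g < size (ArrM k \<alpha> fs g)" by simp

lemma dcomp_assoc_aux:
  "size f + size g + size h = n \<Longrightarrow> dmor A C f a b \<Longrightarrow> dmor A C g b c \<Longrightarrow> dmor A C h c d \<Longrightarrow> is_cat A \<Longrightarrow>
   dcomp A h (dcomp A g f) = dcomp A (dcomp A h g) f"
proof (induction n arbitrary: f g h a b c d rule: less_induct)
  case (less n)
  show ?case
  proof (cases a)
    case (At o1)
    with less.prems show ?thesis
      by (auto elim!: dmor_AtE simp: is_cat_def)
  next
    case (Arr as a0)
    from less.prems(2) obtain k \<alpha> fs f0 as' a' where f: "f = ArrM k \<alpha> fs f0" "b = Arr as' a'" "sobj A as" "sobj A as'"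
      "k = length as'" "length \<alpha> = length as" "length fs = length as" "inC C k \<alpha>"
      "\<forall>i<length as. \<alpha> ! i < k \<and> dmor A C (fs ! i) (as' ! (\<alpha> ! i)) (as ! i)" "dmor A C f0 a0 a'"
      unfolding Arr by (rule dmor_ArrE)
    from less.prems(3) obtain k' \<beta> gs g0 as'' a'' where g: "g = ArrM k' \<beta> gs g0" "c = Arr as'' a''"
      "k' = length as''" "length \<beta> = length as'" "length gs = length as'" "inC C k' \<beta>"
      "\<forall>i<length as'. \<beta> ! i < k' \<and> dmor A C (gs ! i) (as'' ! (\<beta> ! i)) (as' ! i)" "dmor A C g0 a' a''"
      unfolding f by (rule dmor_ArrE)
    from less.prems(4) obtain k'' \<gamma> hs h0 as''' a''' where h: "h = ArrM k'' \<gamma> hs h0" "d = Arr as''' a'''"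
      "k'' = length as'''" "length \<gamma> = length as''" "length hs = length as''" "inC C k'' \<gamma>"
      "\<forall>i<length as''. \<gamma> ! i < k'' \<and> dmor A C (hs ! i) (as''' ! (\<gamma> ! i)) (as'' ! i)" "dmor A C h0 a'' a'''"
      unfolding g by (rule dmor_ArrE)
    have c0: "dcomp A h0 (dcomp A g0 f0) = dcomp A (dcomp A h0 g0) f0"
      using less.IH[of "size f0 + size g0 + size h0" f0 g0 h0] f g h less.prems(1,5) by auto
    have ci: "dcomp A (dcomp A (fs ! i) (gs ! (\<alpha> ! i))) (hs ! (\<beta> ! (\<alpha> ! i))) =
              dcomp A (fs ! i) (dcomp A (gs ! (\<alpha> ! i)) (hs ! (\<beta> ! (\<alpha> ! i))))" if i: "i < length as" for i
    proof -
      have ai: "\<alpha> ! i < length as'" using f i by auto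
      have bi: "\<beta> ! (\<alpha> ! i) < length as''" using g ai by auto
      have s: "size (hs ! (\<beta> ! (\<alpha> ! i))) + size (gs ! (\<alpha> ! i)) + size (fs ! i) < n"
        using size_tm_nth[of i fs k \<alpha> f0] size_tm_nth[of "\<alpha> ! i" gs k' \<beta> g0] size_tm_nth[of "\<beta> ! (\<alpha> ! i)" hs k'' \<gamma> h0]
          f g h ai bi i less.prems(1) by auto
      show ?thesis
      proof -
        have "dmor A C (hs ! (\<beta> ! (\<alpha> ! i))) (as''' ! (\<gamma> ! (\<beta> ! (\<alpha> ! i)))) (as'' ! (\<beta> ! (\<alpha> ! i)))"
          using h bi by auto
        moreover have "dmor A C (gs ! (\<alpha> ! i)) (as'' ! (\<beta> ! (\<alpha> ! i))) (as' ! (\<alpha> ! i))" using g ai by auto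
        moreover have "dmor A C (fs ! i) (as' ! (\<alpha> ! i)) (as ! i)" using f i by auto
        ultimately show ?thesis using less.IH[OF s refl] less.prems(5) by metis
      qed
    qed
    have sa: "\<forall>x\<in>set \<alpha>. x < length \<beta>" using f g by (auto simp: in_set_conv_nth)
    show ?thesis
      unfolding f g h using f g h ci c0 sa
      by (auto intro!: nth_equalityI)
  qed
qed

lemma dcomp_assoc:
  "dmor A C f a b \<Longrightarrow> dmor A C g b c \<Longrightarrow> dmor A C h c d \<Longrightarrow> is_cat A \<Longrightarrow>
   dcomp A h (dcomp A g f) = dcomp A (dcomp A h g) f"
  using dcomp_assoc_aux by blast

lemma smor_def': "smor A C (k, \<alpha>, fs) as bs \<longleftrightarrow>
     sobj A as \<and> sobj A bs \<and> k = length as \<and> length \<alpha> = length bs \<and> length fs = length bs \<and>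
     inC C k \<alpha> \<and> (\<forall>i<length bs. \<alpha> ! i < k \<and> dmor A C (fs ! i) (as ! (\<alpha> ! i)) (bs ! i))"
  by (simp add: smor_def)

lemma sid_typed: "is_cat A \<Longrightarrow> sobj A as \<Longrightarrow> smor A C (sid A as) as as"
  by (auto simp: sid_def smor_def' inC_id intro!: did_typed simp: sobj_def)

lemma sthen_typed:
  assumes "smor A C \<phi> as bs" "smor A C \<psi> bs cs" "is_cat A"
  shows "smor A C (sthen A \<phi> \<psi>) as cs"
proof -
  obtain k \<alpha> fs where p: "\<phi> = (k, \<alpha>, fs)" by (cases \<phi>) auto
  obtain m \<beta> gs where q: "\<psi> = (m, \<beta>, gs)" by (cases \<psi>) auto
  show ?thesis using assms inC_comp[of C m \<beta> k \<alpha>] unfolding p q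
    by (auto simp: smor_def' intro: dcomp_typed)
qed

lemma dcomp_idl: "dmor A C f a b \<Longrightarrow> is_cat A \<Longrightarrow> dcomp A (did A b) f = f"
  using dcomp_id by blast
lemma dcomp_idr: "dmor A C f a b \<Longrightarrow> is_cat A \<Longrightarrow> dcomp A f (did A a) = f"
  using dcomp_id by blast

lemma sthen_sid_left:
  assumes "smor A C \<phi> as bs" "is_cat A"
  shows "sthen A (sid A as) \<phi> = \<phi>"
proof -
  obtain k \<alpha> fs where p: "\<phi> = (k, \<alpha>, fs)" by (cases \<phi>) auto
  show ?thesis using assms unfolding p
    by (auto simp: smor_def' sid_def intro!: nth_equalityI dcomp_idl dcomp_idr) 
qed

lemma sthen_sid_right:
  assumes "smor A C \<phi> as bs" "is_cat A"
  shows "sthen A \<phi> (sid A bs) = \<phi>"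
proof -
  obtain k \<alpha> fs where p: "\<phi> = (k, \<alpha>, fs)" by (cases \<phi>) auto
  show ?thesis using assms unfolding p
    by (auto simp: smor_def' sid_def intro!: nth_equalityI dcomp_idl dcomp_idr) 
qed

lemma sthen_assoc:
  assumes "smor A C \<phi> as bs" "smor A C \<psi> bs cs" "smor A C \<chi> cs ds" "is_cat A"
  shows "sthen A \<phi> (sthen A \<psi> \<chi>) = sthen A (sthen A \<phi> \<psi>) \<chi>"
proof -
  obtain k \<alpha> fs where p: "\<phi> = (k, \<alpha>, fs)" by (cases \<phi>) auto
  obtain m \<beta> gs where q: "\<psi> = (m, \<beta>, gs)" by (cases \<psi>) auto
  obtain l \<gamma> hs where r: "\<chi> = (l, \<gamma>, hs)" by (cases \<chi>) auto
  have "dcomp A (dcomp A (hs ! i) (gs ! (\<gamma> ! i))) (fs ! (\<beta> ! (\<gamma> ! i))) =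
        dcomp A (hs ! i) (dcomp A (gs ! (\<gamma> ! i)) (fs ! (\<beta> ! (\<gamma> ! i))))" if i: "i < length ds" for i
    using assms unfolding p q r smor_def' using i
    by (intro dcomp_assoc[symmetric]) auto
  moreover have "\<forall>x\<in>set \<gamma>. x < length \<beta>" using assms unfolding p q r smor_def' by (auto simp: in_set_conv_nth)
  ultimately show ?thesis using assms unfolding p q r smor_def'
    by (auto intro!: nth_equalityI)
qed

lemma smor_single: "dmor A C g a b \<Longrightarrow> is_cat A \<Longrightarrow> smor A C (1, [0], [g]) [a] [b]"
  using dmor_objs[of A C g a b] by (cases C) (auto simp: smor_def' sobj_def)

lemma cmorD: "cmor A C \<eta> \<Delta> \<Gamma> \<Longrightarrow> j < length \<Delta> \<Longrightarrow> smor A C (\<eta> ! j) (\<Delta> ! j) (\<Gamma> ! j)"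
  by (simp add: cmor_def)

lemma cmor_len: "cmor A C \<eta> \<Delta> \<Gamma> \<Longrightarrow> length \<eta> = length \<Delta> \<and> length \<Gamma> = length \<Delta>"
  by (simp add: cmor_def)

lemma smor_sobj: "smor A C \<phi> as bs \<Longrightarrow> sobj A as \<and> sobj A bs"
  by (cases \<phi>) (auto simp: smor_def')

lemma cmor_cobj1: "cmor A C \<eta> \<Delta> \<Gamma> \<Longrightarrow> length \<Delta> = n \<Longrightarrow> cobj A n \<Delta>"
  unfolding cobj_def by (metis cmorD smor_sobj in_set_conv_nth)

lemma cmor_cobj2: "cmor A C \<eta> \<Delta> \<Gamma> \<Longrightarrow> length \<Delta> = n \<Longrightarrow> cobj A n \<Gamma>"
  unfolding cobj_def by (metis cmorD cmor_len smor_sobj in_set_conv_nth)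

lemma cid_typed: "is_cat A \<Longrightarrow> cobj A n \<Delta> \<Longrightarrow> cmor A C (cid A \<Delta>) \<Delta> \<Delta>"
  by (auto simp: cmor_def cid_def cobj_def intro!: sid_typed)

lemma cthen_typed: "cmor A C \<eta> \<Delta>' \<Delta> \<Longrightarrow> cmor A C \<theta> \<Delta> \<Gamma> \<Longrightarrow> is_cat A \<Longrightarrow> cmor A C (cthen A \<eta> \<theta>) \<Delta>' \<Gamma>"
  by (auto simp: cmor_def cthen_def intro: sthen_typed)

lemma cthen_nth: "i < length \<eta> \<Longrightarrow> i < length \<theta> \<Longrightarrow> cthen A \<eta> \<theta> ! i = sthen A (\<eta> ! i) (\<theta> ! i)"
  by (simp add: cthen_def)

lemma cthen_cid_left: "cmor A C \<eta> \<Delta>' \<Delta> \<Longrightarrow> is_cat A \<Longrightarrow> cthen A (cid A \<Delta>') \<eta> = \<eta>"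
  by (auto simp: cmor_def cthen_def cid_def intro!: nth_equalityI sthen_sid_left)

lemma cthen_cid_right: "cmor A C \<eta> \<Delta>' \<Delta> \<Longrightarrow> is_cat A \<Longrightarrow> cthen A \<eta> (cid A \<Delta>) = \<eta>"
  by (auto simp: cmor_def cthen_def cid_def intro!: nth_equalityI sthen_sid_right)

lemma cthen_assoc: "cmor A C \<eta> \<Delta>1 \<Delta>2 \<Longrightarrow> cmor A C \<theta> \<Delta>2 \<Delta>3 \<Longrightarrow> cmor A C \<zeta> \<Delta>3 \<Delta>4 \<Longrightarrow> is_cat A \<Longrightarrow>
   cthen A \<eta> (cthen A \<theta> \<zeta>) = cthen A (cthen A \<eta> \<theta>) \<zeta>"
  by (auto simp: cmor_def cthen_def intro!: nth_equalityI sthen_assoc)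

lemma cthen_append: "length \<eta> = length \<theta> \<Longrightarrow> cthen A (\<eta> @ [x]) (\<theta> @ [y]) = cthen A \<eta> \<theta> @ [sthen A x y]"
  by (simp add: cthen_def)

lemma cid_append: "cid A (\<Delta> @ [as]) = cid A \<Delta> @ [sid A as]"
  by (simp add: cid_def)

lemma cmor_append: "cmor A C \<eta> \<Delta> \<Gamma> \<Longrightarrow> smor A C x as bs \<Longrightarrow> cmor A C (\<eta> @ [x]) (\<Delta> @ [as]) (\<Gamma> @ [bs])"
  by (auto simp: cmor_def nth_append)

lemma lastidx_prop: "x \<in> set xs \<Longrightarrow> lastidx xs x < length xs \<and> xs ! lastidx xs x = x"
proof -
  assume "x \<in> set xs"
  then obtain k where k: "k < length xs" "xs ! k = x" by (auto simp: in_set_conv_nth)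
  show ?thesis unfolding lastidx_def
    by (rule GreatestI_nat[where P="\<lambda>i. i < length xs \<and> xs ! i = x", OF conjI[OF k], of "length xs"]) auto
qed

lemma lastidx_lt: "x \<in> set xs \<Longrightarrow> lastidx xs x < length xs"
  using lastidx_prop[of x xs] by blast

lemma deriv_det: "deriv A C xs p \<Delta> M a \<Longrightarrow> dvctx p = \<Delta> \<and> dvty p = a"
  by (induction rule: deriv.induct) auto

lemma deriv_objs: "deriv A C xs p \<Delta> M a \<Longrightarrow> cobj A (length xs) \<Delta> \<and> dobj A a"
proof (induction rule: deriv.induct)
  case (deriv_Abs xs x p \<Delta> as M b)
  then show ?case by (auto simp: cobj_def sobj_def)
qed auto

lemma dvctx_ract[simp]: "dvctx (ract A \<Gamma> \<eta> p) = \<Gamma>"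
  by (cases p) (auto split: ty.splits)
lemma dvty_ract[simp]: "dvty (ract A \<Gamma> \<eta> p) = dvty p"
  by (cases p) (auto split: ty.splits)
lemma dvctx_lact[simp]: "dvctx (lact A f b p) = dvctx p"
  by (cases p) (auto split: ty.splits tm.splits prod.splits)
lemma dvty_lact[simp]: "dvty (lact A f b p) = b"
  by (cases p) (auto split: ty.splits tm.splits prod.splits)

lemma ract_typed:
  "deriv A C xs p \<Delta> M a \<Longrightarrow> cmor A C \<eta> \<Delta>' \<Delta> \<Longrightarrow> is_cat A \<Longrightarrow> deriv A C xs (ract A \<Delta>' \<eta> p) \<Delta>' M a"
proof (induction arbitrary: \<Delta>' \<eta> rule: deriv.induct)
  case (deriv_Var xs \<Delta> a x i hs)
  have l0: "length \<Delta> = length xs" using deriv_Var by (auto simp: cobj_def)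
  have l: "length \<eta> = length xs" "length \<Delta>' = length xs" "length \<Delta> = length xs"
    using cmor_len[OF deriv_Var.prems(1)] l0 by auto
  show ?case
    unfolding ract.simps
  proof (rule deriv.deriv_Var)
    show "cobj A (length xs) \<Delta>'" using deriv_Var l cmor_cobj1 by blast
    show "\<forall>j<length xs. smor A C (map2 (sthen A) \<eta> hs ! j) (\<Delta>' ! j) (if j = i then [a] else [])"
      using deriv_Var l by (auto intro!: sthen_typed dest: cmorD)
  qed (use deriv_Var l in auto)
next
  case (deriv_Abs xs x p \<Delta> as M b)
  have "sobj A as" using deriv_objs[OF deriv_Abs.hyps] by (auto simp: cobj_def)
  then have "cmor A C (\<eta> @ [sid A as]) (\<Delta>' @ [as]) (\<Delta> @ [as])"
    using deriv_Abs by (intro cmor_append sid_typed) auto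
  then show ?case using deriv_Abs by (auto intro!: deriv.deriv_Abs)
next
  case (deriv_App xs p0 \<Gamma>0 M as a ps \<Gamma>s N \<Delta> \<eta>')
  have "cobj A (length xs) \<Delta>'" using deriv_App cmor_len[OF deriv_App.prems(1)] cmor_cobj1
    by (metis cobj_def)
  then show ?case unfolding ract.simps
    using deriv_App by (intro deriv.deriv_App) (auto intro: cthen_typed)
qed

lemma lact_typed:
  "deriv A C xs p \<Delta> M a \<Longrightarrow> dmor A C f a b \<Longrightarrow> is_cat A \<Longrightarrow> deriv A C xs (lact A f b p) \<Delta> M b"
proof (induction arbitrary: f b rule: deriv.induct)
  case (deriv_Var xs \<Delta> a x i hs)
  have i: "i < length xs" using deriv_Var by (metis lastidx_lt)
  show ?case
    unfolding lact.simps
  proof (rule deriv.deriv_Var)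
    show "dobj A b" using dmor_objs deriv_Var by blast
    have "smor A C (1, [0], [f]) [a] [b]" by (rule smor_single) (use deriv_Var in auto)
    then have "smor A C (sthen A (hs ! i) (1, [0], [f])) (\<Delta> ! i) [b]"
      using deriv_Var i by (intro sthen_typed) auto
    then show "\<forall>j<length xs. smor A C (hs[i := sthen A (hs ! i) (1, [0], [f])] ! j) (\<Delta> ! j) (if j = i then [b] else [])"
      using deriv_Var i by auto
  qed (use deriv_Var in auto)
next
  case (deriv_Abs xs x p \<Delta> as M b0)
  from deriv_Abs.prems(1) obtain k \<alpha> gs g0 bs b' where g: "f = ArrM k \<alpha> gs g0" "b = Arr bs b'" "sobj A as" "sobj A bs"
    "k = length bs" "length \<alpha> = length as" "length gs = length as" "inC C k \<alpha>"
    "\<forall>i<length as. \<alpha> ! i < k \<and> dmor A C (gs ! i) (bs ! (\<alpha> ! i)) (as ! i)" "dmor A C g0 b0 b'"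
    by (rule dmor_ArrE)
  have s: "smor A C (k, \<alpha>, gs) bs as" using g by (simp add: smor_def')
  have "cobj A (length xs) \<Delta>" using deriv_objs[OF deriv_Abs.hyps] by (auto simp: cobj_def)
  then have c: "cmor A C (cid A \<Delta> @ [(k, \<alpha>, gs)]) (\<Delta> @ [bs]) (\<Delta> @ [as])"
    using s deriv_Abs by (intro cmor_append cid_typed) auto
  show ?case unfolding g lact.simps using deriv_Abs g c by (auto intro!: deriv.deriv_Abs ract_typed)
next
  case (deriv_App xs p0 \<Gamma>0 M as a ps \<Gamma>s N \<Delta> \<eta>')
  have ty: "dvty p0 = Arr as a" using deriv_App deriv_det by blast
  have so: "sobj A as" using deriv_objs[OF deriv_App.hyps(1)] by (simp add: sobj_def)
  have "dmor A C (ArrM (length as) [0..<length as] (map (did A) as) f) (Arr as a) (Arr as b)"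
    using deriv_App so by (intro dmor_Arr) (auto simp: inC_id sobj_def intro!: did_typed)
  then show ?case unfolding lact.simps ty using deriv_App
    by (auto intro!: deriv.deriv_App)
qed

lemma ract_id: "deriv A C xs p \<Delta> M a \<Longrightarrow> is_cat A \<Longrightarrow> ract A \<Delta> (cid A \<Delta>) p = p"
proof (induction rule: deriv.induct)
  case (deriv_Var xs \<Delta> a x i hs)
  have "length \<Delta> = length xs" using deriv_Var by (simp add: cobj_def)
  then show ?case using deriv_Var
    by (auto simp: cid_def intro!: nth_equalityI sthen_sid_left)
next
  case (deriv_Abs xs x p \<Delta> as M b)
  then show ?case by (simp add: cid_append)
next
  case (deriv_App xs p0 \<Gamma>0 M as a ps \<Gamma>s N \<Delta> \<eta>)
  then show ?case by (simp add: cthen_cid_left)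
qed

lemma sid_single: "sid A [a] = (1, [0], [did A a])"
  by (simp add: sid_def)

lemma lact_id: "deriv A C xs p \<Delta> M a \<Longrightarrow> is_cat A \<Longrightarrow> lact A (did A a) a p = p"
proof (induction rule: deriv.induct)
  case (deriv_Var xs \<Delta> a x i hs)
  have i: "i < length xs" using deriv_Var(3,4) lastidx_lt by simp
  have "smor A C (hs ! i) (\<Delta> ! i) [a]" using deriv_Var(6) i by auto
  from sthen_sid_right[OF this deriv_Var(7)] have "sthen A (hs ! i) (1, [0], [did A a]) = hs ! i"
    by (simp only: sid_single)
  then show ?case by simp
next
  case (deriv_Abs xs x p \<Delta> as M b)
  have "cobj A (length xs) \<Delta>" using deriv_objs[OF deriv_Abs.hyps] by (auto simp: cobj_def)
  have e: "cid A \<Delta> @ [(length as, [0..<length as], map (did A) as)] = cid A (\<Delta> @ [as])"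
    by (simp add: cid_append sid_def)
  have "ract A (\<Delta> @ [as]) (cid A (\<Delta> @ [as])) p = p" by (rule ract_id[OF deriv_Abs(1,3)])
  then show ?case using deriv_Abs(2,3) by (simp add: e)
next
  case (deriv_App xs p0 \<Gamma>0 M as a ps \<Gamma>s N \<Delta> \<eta>)
  have ty: "dvty p0 = Arr as a" using deriv_App deriv_det by blast
  then show ?case using deriv_App(6,8) by simp
qed

lemma ract_comp:
  "deriv A C xs p \<Delta> M a \<Longrightarrow> cmor A C \<theta> \<Delta>'' \<Delta> \<Longrightarrow> cmor A C \<theta>' \<Delta>' \<Delta>'' \<Longrightarrow> is_cat A \<Longrightarrow>
   ract A \<Delta>' \<theta>' (ract A \<Delta>'' \<theta> p) = ract A \<Delta>' (cthen A \<theta>' \<theta>) p"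
proof (induction arbitrary: \<Delta>' \<Delta>'' \<theta> \<theta>' rule: deriv.induct)
  case (deriv_Var xs \<Delta> a x i hs)
  have l0: "length \<Delta> = length xs" using deriv_Var by (simp add: cobj_def)
  have l: "length \<theta> = length xs" "length \<theta>' = length xs" "length \<Delta>'' = length xs" "length \<Delta>' = length xs"
    using cmor_len[OF deriv_Var.prems(1)] cmor_len[OF deriv_Var.prems(2)] l0 by auto
  have "sthen A (\<theta>' ! j) (sthen A (\<theta> ! j) (hs ! j)) = sthen A (sthen A (\<theta>' ! j) (\<theta> ! j)) (hs ! j)"
    if j: "j < length xs" for j
  proof -
    have "smor A C (hs ! j) (\<Delta> ! j) (if j = i then [a] else [])" using deriv_Var(6) j by auto
    moreover have "smor A C (\<theta> ! j) (\<Delta>'' ! j) (\<Delta> ! j)" using cmorD[OF deriv_Var.prems(1)] l j by auto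
    moreover have "smor A C (\<theta>' ! j) (\<Delta>' ! j) (\<Delta>'' ! j)" using cmorD[OF deriv_Var.prems(2)] l j by auto
    ultimately show ?thesis using sthen_assoc deriv_Var.prems(3) by metis
  qed
  then show ?case using l l0 deriv_Var(5)
    by (auto simp: cthen_def intro!: nth_equalityI)
next
  case (deriv_Abs xs x p \<Delta> as M b)
  have so: "sobj A as" using deriv_objs[OF deriv_Abs.hyps] by (auto simp: cobj_def)
  have c1: "cmor A C (\<theta> @ [sid A as]) (\<Delta>'' @ [as]) (\<Delta> @ [as])"
    using deriv_Abs so by (intro cmor_append sid_typed) auto
  have c2: "cmor A C (\<theta>' @ [sid A as]) (\<Delta>' @ [as]) (\<Delta>'' @ [as])"
    using deriv_Abs so by (intro cmor_append sid_typed) auto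
  have e: "cthen A (\<theta>' @ [sid A as]) (\<theta> @ [sid A as]) = cthen A \<theta>' \<theta> @ [sid A as]"
    using cmor_len[OF deriv_Abs.prems(1)] cmor_len[OF deriv_Abs.prems(2)] 
      sthen_sid_left[OF sid_typed[OF deriv_Abs.prems(3) so]] deriv_Abs.prems(3)
    by (simp add: cthen_append)
  show ?case using deriv_Abs.IH[OF c1 c2 deriv_Abs.prems(3)] by (simp add: e)
next
  case (deriv_App xs p0 \<Gamma>0 M as a ps \<Gamma>s N \<Delta> \<eta>)
  then show ?case by (simp add: cthen_assoc)
qed

lemma lact_ract:
  "deriv A C xs p \<Delta> M a \<Longrightarrow> cmor A C \<theta> \<Delta>' \<Delta> \<Longrightarrow> dmor A C g a b \<Longrightarrow> is_cat A \<Longrightarrow>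
   lact A g b (ract A \<Delta>' \<theta> p) = ract A \<Delta>' \<theta> (lact A g b p)"
proof (induction arbitrary: \<Delta>' \<theta> g b rule: deriv.induct)
  case (deriv_Var xs \<Delta> a x i hs)
  have i: "i < length xs" using deriv_Var(3,4) lastidx_lt by simp
  have l0: "length \<Delta> = length xs" using deriv_Var by (simp add: cobj_def)
  have l: "length \<theta> = length xs" "length \<Delta>' = length xs"
    using cmor_len[OF deriv_Var.prems(1)] l0 by auto
  have G: "smor A C (1, [0], [g]) [a] [b]" by (rule smor_single) (use deriv_Var in auto)
  have t1: "smor A C (\<theta> ! i) (\<Delta>' ! i) (\<Delta> ! i)" using cmorD[OF deriv_Var.prems(1)] i l by auto
  have t2: "smor A C (hs ! i) (\<Delta> ! i) [a]" using deriv_Var(6) i by auto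
  have "sthen A (sthen A (\<theta> ! i) (hs ! i)) (1, [0], [g]) = sthen A (\<theta> ! i) (sthen A (hs ! i) (1, [0], [g]))"
    using sthen_assoc[OF t1 t2 G deriv_Var.prems(3)] by simp
  then show ?case using deriv_Var l i
    by (auto intro!: nth_equalityI simp: nth_list_update)
next
  case (deriv_Abs xs x p \<Delta> as M b0)
  from deriv_Abs.prems(2) obtain k \<alpha> gs g0 bs b' where g: "g = ArrM k \<alpha> gs g0" "b = Arr bs b'" "sobj A as" "sobj A bs"
    "k = length bs" "length \<alpha> = length as" "length gs = length as" "inC C k \<alpha>"
    "\<forall>i<length as. \<alpha> ! i < k \<and> dmor A C (gs ! i) (bs ! (\<alpha> ! i)) (as ! i)" "dmor A C g0 b0 b'"
    by (rule dmor_ArrE)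
  have s: "smor A C (k, \<alpha>, gs) bs as" using g by (simp add: smor_def')
  have cD: "cobj A (length xs) \<Delta>" using deriv_objs[OF deriv_Abs.hyps] by (auto simp: cobj_def)
  have cD': "cobj A (length xs) \<Delta>'" using cmor_cobj1[OF deriv_Abs.prems(1)] cmor_len[OF deriv_Abs.prems(1)] cD
    by (simp add: cobj_def)
  have p1: "deriv A C (xs @ [x]) (lact A g0 b' p) (\<Delta> @ [as]) M b'"
    using lact_typed deriv_Abs g by blast
  have c1: "cmor A C (\<theta> @ [sid A as]) (\<Delta>' @ [as]) (\<Delta> @ [as])"
    using deriv_Abs g by (intro cmor_append sid_typed) auto
  have c2: "cmor A C (cid A \<Delta>' @ [(k, \<alpha>, gs)]) (\<Delta>' @ [bs]) (\<Delta>' @ [as])"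
    using cD' s deriv_Abs by (intro cmor_append cid_typed) auto
  have c3: "cmor A C (cid A \<Delta> @ [(k, \<alpha>, gs)]) (\<Delta> @ [bs]) (\<Delta> @ [as])"
    using cD s deriv_Abs by (intro cmor_append cid_typed) auto
  have c4: "cmor A C (\<theta> @ [sid A bs]) (\<Delta>' @ [bs]) (\<Delta> @ [bs])"
    using deriv_Abs g by (intro cmor_append sid_typed) auto
  have lenth: "length \<theta> = length \<Delta>'" "length (cid A \<Delta>') = length \<Delta>'" "length (cid A \<Delta>) = length \<Delta>"
      "length \<Delta> = length \<Delta>'"
    using cmor_len[OF deriv_Abs.prems(1)] by (auto simp: cid_def)
  have e1: "cthen A (cid A \<Delta>' @ [(k, \<alpha>, gs)]) (\<theta> @ [sid A as]) = \<theta> @ [(k, \<alpha>, gs)]"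
    using lenth cthen_cid_left[OF deriv_Abs.prems(1) deriv_Abs.prems(3)] sthen_sid_right[OF s deriv_Abs.prems(3)]
    by (simp add: cthen_append)
  have e2: "cthen A (\<theta> @ [sid A bs]) (cid A \<Delta> @ [(k, \<alpha>, gs)]) = \<theta> @ [(k, \<alpha>, gs)]"
    using lenth cthen_cid_right[OF deriv_Abs.prems(1) deriv_Abs.prems(3)] sthen_sid_left[OF s deriv_Abs.prems(3)]
    by (simp add: cthen_append)
  have "lact A g b (ract A \<Delta>' \<theta> (DAbs \<Delta> (Arr as b0) p)) =
      DAbs \<Delta>' b (ract A (\<Delta>' @ [bs]) (cid A \<Delta>' @ [(k, \<alpha>, gs)]) (lact A g0 b' (ract A (\<Delta>' @ [as]) (\<theta> @ [sid A as]) p)))"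
    by (simp add: g)
  also have "\<dots> = DAbs \<Delta>' b (ract A (\<Delta>' @ [bs]) (cid A \<Delta>' @ [(k, \<alpha>, gs)]) (ract A (\<Delta>' @ [as]) (\<theta> @ [sid A as]) (lact A g0 b' p)))"
    using deriv_Abs.IH[OF c1 g(10) deriv_Abs.prems(3)] by simp
  also have "\<dots> = DAbs \<Delta>' b (ract A (\<Delta>' @ [bs]) (\<theta> @ [(k, \<alpha>, gs)]) (lact A g0 b' p))"
    using ract_comp[OF p1 c1 c2 deriv_Abs.prems(3)] e1 by simp
  also have "\<dots> = DAbs \<Delta>' b (ract A (\<Delta>' @ [bs]) (\<theta> @ [sid A bs]) (ract A (\<Delta> @ [bs]) (cid A \<Delta> @ [(k, \<alpha>, gs)]) (lact A g0 b' p)))"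
    using ract_comp[OF p1 c3 c4 deriv_Abs.prems(3)] e2 by simp
  also have "\<dots> = ract A \<Delta>' \<theta> (lact A g b (DAbs \<Delta> (Arr as b0) p))"
    by (simp add: g)
  finally show ?case .
next
  case (deriv_App xs p0 \<Gamma>0 M as a ps \<Gamma>s N \<Delta> \<eta>)
  have ty: "dvty p0 = Arr as a" using deriv_App deriv_det by blast
  then show ?case by simp
qed

fun phi :: "('o,'m) dv \<Rightarrow> ('o,'m) el" where
  "phi (DVar \<Delta> a i hs) = EMor hs"
| "phi (DAbs \<Delta> a p) = phi p"
| "phi (DApp \<Delta> a p0 ps \<eta>) = EApp (case dvty p0 of Arr as _ \<Rightarrow> as | At _ \<Rightarrow> []) (dvctx p0 # map dvctx ps) (phi p0) (map phi ps) \<eta>"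

definition car where "car A C xs M = fst (sem A C xs M)"
definition rel where "rel A C xs M = fst (snd (sem A C xs M))"
definition act where "act A C xs M = snd (snd (sem A C xs M))"

lemma car_Var: "car A C xs (Var x) \<Delta> a =
   {EMor hs | hs. cmor A C hs \<Delta> (map (\<lambda>j. if j = lastidx xs x then [a] else []) [0..<length xs])}"
  by (simp add: car_def Let_def)
lemma rel_Var: "rel A C xs (Var x) \<Delta> a = Id_on (car A C xs (Var x) \<Delta> a)"
  by (simp add: car_def rel_def Let_def)
lemma act_Var: "act A C xs (Var x) \<eta> f (EMor hs) =
   EMor (map (\<lambda>j. if j = lastidx xs x then sthen A (sthen A (\<eta> ! j) (hs ! j)) (1, [0], [f])
                                        else sthen A (\<eta> ! j) (hs ! j)) [0..<length xs])"
  by (simp add: act_def Let_def)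

lemma car_Lam: "car A C xs (Lam x M) \<Delta> a = (case a of Arr as b \<Rightarrow> car A C (xs @ [x]) M (\<Delta> @ [as]) b | At _ \<Rightarrow> {})"
  by (cases a) (simp_all add: car_def split: prod.split)
lemma rel_Lam: "rel A C xs (Lam x M) \<Delta> a = (case a of Arr as b \<Rightarrow> rel A C (xs @ [x]) M (\<Delta> @ [as]) b | At _ \<Rightarrow> {})"
  by (cases a) (simp_all add: rel_def split: prod.split)
lemma act_Lam: "act A C xs (Lam x M) \<eta> (ArrM k \<alpha> gs g) e = act A C (xs @ [x]) M (\<eta> @ [(k, \<alpha>, gs)]) g e"
  by (cases "sem A C (xs @ [x]) M") (simp add: act_def)

lemma car_App: "car A C xs (App M N) = appcar A C (length xs) (car A C xs M) (car A C xs N)"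
  by (cases "sem A C xs M"; cases "sem A C xs N") (simp add: car_def)
lemma rel_App: "rel A C xs (App M N) \<Delta> a =
   Restr ((appgen A C (length xs) (car A C xs M) (rel A C xs M) (act A C xs M) (car A C xs N) (rel A C xs N) (act A C xs N) \<Delta> a
     \<union> (appgen A C (length xs) (car A C xs M) (rel A C xs M) (act A C xs M) (car A C xs N) (rel A C xs N) (act A C xs N) \<Delta> a)\<inverse>)\<^sup>*)
    (appcar A C (length xs) (car A C xs M) (car A C xs N) \<Delta> a)"
  by (cases "sem A C xs M"; cases "sem A C xs N") (simp add: car_def rel_def act_def)
lemma act_App: "act A C xs (App M N) = appact A (act A C xs M)"
  by (cases "sem A C xs M"; cases "sem A C xs N") (simp add: act_def)

inductive_cases derivE_Var: "deriv A C xs p \<Delta> (Var x) a"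
inductive_cases derivE_Lam: "deriv A C xs p \<Delta> (Lam x M) a"
inductive_cases derivE_App: "deriv A C xs p \<Delta> (App M N) a"

lemma phi_car: "deriv A C xs p \<Delta> M a \<Longrightarrow> phi p \<in> car A C xs M \<Delta> a"
proof (induction rule: deriv.induct)
  case (deriv_Var xs \<Delta> a x i hs)
  have "cmor A C hs \<Delta> (map (\<lambda>j. if j = lastidx xs x then [a] else []) [0..<length xs])"
    using deriv_Var unfolding cmor_def by (auto simp: cobj_def)
  then show ?case by (simp add: car_Var)
next
  case (deriv_Abs xs x p \<Delta> as M b)
  then show ?case by (simp add: car_Lam)
next
  case (deriv_App xs p0 \<Gamma>0 M as a ps \<Gamma>s N \<Delta> \<eta>)
  have d0: "dvctx p0 = \<Gamma>0" "dvty p0 = Arr as a" using deriv_App deriv_det by blast+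
  have dps: "\<forall>i<length as. deriv A C xs (ps ! i) (\<Gamma>s ! i) N (as ! i)" using deriv_App by blast
  have lps: "length ps = length as" using deriv_App by blast
  have di: "map dvctx ps = \<Gamma>s"
  proof (rule nth_equalityI)
    show "map dvctx ps ! i = \<Gamma>s ! i" if "i < length (map dvctx ps)" for i
    proof -
      have "deriv A C xs (ps ! i) (\<Gamma>s ! i) N (as ! i)" using that dps lps by simp
      then show ?thesis using that deriv_det by fastforce
    qed
  qed (use lps deriv_App in simp)
  have o0: "cobj A (length xs) \<Gamma>0" "sobj A as" using deriv_objs[OF deriv_App(1)] by (auto simp: sobj_def)
  have oi: "\<forall>\<Gamma>\<in>set \<Gamma>s. cobj A (length xs) \<Gamma>" using deriv_App deriv_objs by (metis in_set_conv_nth)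
  show ?case unfolding car_App appcar_def phi.simps d0 di
    using deriv_App o0 oi by auto
qed

lemma phi_inj: "deriv A C xs p \<Delta> M a \<Longrightarrow> deriv A C xs q \<Delta> M a \<Longrightarrow> phi p = phi q \<Longrightarrow> p = q"
proof (induction arbitrary: q rule: deriv.induct)
  case (deriv_Var xs \<Delta> a x i hs)
  from deriv_Var.prems(1) obtain hs' where "q = DVar \<Delta> a (lastidx xs x) hs'"
    by (rule derivE_Var) simp
  then show ?case using deriv_Var.prems(2) deriv_Var.hyps(4) by simp
next
  case (deriv_Abs xs x p \<Delta> as M b)
  from deriv_Abs.prems(1) obtain q' where q: "q = DAbs \<Delta> (Arr as b) q'" "deriv A C (xs @ [x]) q' (\<Delta> @ [as]) M b"
    by (rule derivE_Lam) simp
  have "p = q'" using deriv_Abs.IH[OF q(2)] deriv_Abs.prems(2) q(1) by simp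
  then show ?case using q by simp
next
  case (deriv_App xs p0 \<Gamma>0 M as a ps \<Gamma>s N \<Delta> \<eta>)
  from deriv_App.prems(1) obtain q0 \<Gamma>0' as' qs \<Gamma>s' \<eta>' where
    q: "q = DApp \<Delta> a q0 qs \<eta>'" "deriv A C xs q0 \<Gamma>0' M (Arr as' a)" "length qs = length as'"
       "length \<Gamma>s' = length as'" "\<forall>i<length as'. deriv A C xs (qs ! i) (\<Gamma>s' ! i) N (as' ! i)"
    by (rule derivE_App) simp
  have d0: "dvctx p0 = \<Gamma>0" "dvty p0 = Arr as a" using deriv_App.hyps(1) deriv_det by blast+
  have d0': "dvctx q0 = \<Gamma>0'" "dvty q0 = Arr as' a" using q(2) deriv_det by blast+
  have e0: "EApp as (\<Gamma>0 # map dvctx ps) (phi p0) (map phi ps) \<eta> = EApp as' (\<Gamma>0' # map dvctx qs) (phi q0) (map phi qs) \<eta>'"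
    using deriv_App.prems(2) d0 d0' q(1) by simp
  then have e: "as = as'" "\<Gamma>0 = \<Gamma>0'" "map dvctx ps = map dvctx qs" "phi p0 = phi q0" "map phi ps = map phi qs" "\<eta> = \<eta>'"
    by simp_all
  have "p0 = q0" using deriv_App.IH(1)[of q0] q(2) e by simp
  moreover have "ps = qs"
  proof (rule nth_equalityI)
    have lps: "length ps = length as" using deriv_App.hyps(2) .
    show "length ps = length qs" using lps q(3) e(1) by simp
    fix i assume i: "i < length ps"
    have hyp: "deriv A C xs (ps ! i) (\<Gamma>s ! i) N (as ! i) \<and> (\<forall>q. deriv A C xs q (\<Gamma>s ! i) N (as ! i) \<longrightarrow> phi (ps ! i) = phi q \<longrightarrow> ps ! i = q)"
      using deriv_App.IH(2) i lps by simp
    have dq: "deriv A C xs (qs ! i) (\<Gamma>s' ! i) N (as ! i)" using q(5) e(1) i lps by simp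
    have "dvctx (qs ! i) = dvctx (ps ! i)" using e(3) i lps q(3) e(1) by (metis length_map nth_map)
    then have "\<Gamma>s' ! i = \<Gamma>s ! i" using dq hyp deriv_det by metis
    moreover have "phi (ps ! i) = phi (qs ! i)" using e(5) i lps q(3) e(1) by (metis length_map nth_map)
    ultimately show "ps ! i = qs ! i" using hyp dq by simp
  qed
  ultimately show ?case using q(1) e by simp
qed

lemma equiv_restr_rtc: "G \<subseteq> S \<times> S \<Longrightarrow> equiv S (Restr ((G \<union> G\<inverse>)\<^sup>*) S)"
  unfolding equiv_def refl_on_def sym_def trans_def
proof (intro conjI allI impI)
  fix x y assume "(x, y) \<in> Restr ((G \<union> G\<inverse>)\<^sup>*) S"
  then have "(x, y) \<in> ((G \<union> G\<inverse>)\<^sup>*)" "x \<in> S" "y \<in> S" by auto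
  then have "(y, x) \<in> ((G \<union> G\<inverse>)\<inverse>)\<^sup>*" "x \<in> S" "y \<in> S"
    by (auto intro: rtrancl_converseI)
  then have "(y, x) \<in> ((G \<union> G\<inverse>)\<^sup>*)" "x \<in> S" "y \<in> S"
    by (auto simp: converse_Un sup_commute)
  then show "(y, x) \<in> Restr ((G \<union> G\<inverse>)\<^sup>*) S" by auto
next
  fix x y z assume "(x, y) \<in> Restr ((G \<union> G\<inverse>)\<^sup>*) S" "(y, z) \<in> Restr ((G \<union> G\<inverse>)\<^sup>*) S"
  then show "(x, z) \<in> Restr ((G \<union> G\<inverse>)\<^sup>*) S" by auto
qed auto

lemma appgen_sub: "appgen A C n cM rM tM cN rN tN \<Delta> a \<subseteq> appcar A C n cM cN \<Delta> a \<times> appcar A C n cM cN \<Delta> a"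
  unfolding appgen_def by auto

lemma sem_equiv: "equiv (car A C xs M \<Delta> a) (rel A C xs M \<Delta> a)"
proof (induction M arbitrary: xs \<Delta> a)
  case (Var x)
  have "equiv S (Id_on S)" for S :: "('o,'m) el set" unfolding equiv_def refl_on_def sym_def trans_def by auto
  then show ?case by (simp add: rel_Var)
next
  case (Lam x M)
  then show ?case by (cases a) (auto simp: car_Lam rel_Lam equiv_def refl_on_def)
next
  case (App M N)
  then show ?case unfolding rel_App car_App by (intro equiv_restr_rtc appgen_sub)
qed

lemma phi_act: "deriv A C xs p \<Delta> M a \<Longrightarrow> cmor A C \<eta> \<Delta>' \<Delta> \<Longrightarrow> dmor A C f a a' \<Longrightarrow> is_cat A \<Longrightarrow>
   act A C xs M \<eta> f (phi p) = phi (lact A f a' (ract A \<Delta>' \<eta> p))"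
proof (induction arbitrary: \<Delta>' \<eta> f a' rule: deriv.induct)
  case (deriv_Var xs \<Delta> a x i hs)
  have l0: "length \<Delta> = length xs" using deriv_Var.hyps(1) by (simp add: cobj_def)
  have l: "length \<eta> = length xs" using cmor_len[OF deriv_Var.prems(1)] l0 by auto
  have i: "i < length xs" using deriv_Var.hyps(3,4) lastidx_lt by simp
  show ?case using l i deriv_Var.hyps(4,5)
    by (auto simp: act_Var intro!: nth_equalityI)
next
  case (deriv_Abs xs x p \<Delta> as M b)
  note cm = deriv_Abs.prems(1) and ic = deriv_Abs.prems(3)
  from deriv_Abs.prems(2) obtain k \<alpha> gs g0 bs b' where g: "f = ArrM k \<alpha> gs g0" "a' = Arr bs b'" "sobj A as" "sobj A bs"
    "k = length bs" "length \<alpha> = length as" "length gs = length as" "inC C k \<alpha>"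
    "\<forall>i<length as. \<alpha> ! i < k \<and> dmor A C (gs ! i) (bs ! (\<alpha> ! i)) (as ! i)" "dmor A C g0 b b'"
    by (rule dmor_ArrE)
  have s: "smor A C (k, \<alpha>, gs) bs as" using g by (simp add: smor_def')
  have cD: "cobj A (length xs) \<Delta>" using deriv_objs[OF deriv_Abs.hyps] by (auto simp: cobj_def)
  have cD': "cobj A (length xs) \<Delta>'" using cmor_cobj1[OF cm] cmor_len[OF cm] cD
    by (simp add: cobj_def)
  have p1: "deriv A C (xs @ [x]) (lact A g0 b' p) (\<Delta> @ [as]) M b'"
    using lact_typed deriv_Abs.hyps g(10) ic by blast
  have c1: "cmor A C (\<eta> @ [sid A as]) (\<Delta>' @ [as]) (\<Delta> @ [as])"
    using cm g ic by (intro cmor_append sid_typed) auto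
  have c2: "cmor A C (cid A \<Delta>' @ [(k, \<alpha>, gs)]) (\<Delta>' @ [bs]) (\<Delta>' @ [as])"
    using cD' s ic by (intro cmor_append cid_typed) auto
  have c5: "cmor A C (\<eta> @ [(k, \<alpha>, gs)]) (\<Delta>' @ [bs]) (\<Delta> @ [as])"
    using cm s by (intro cmor_append) auto
  have lenth: "length \<eta> = length \<Delta>'" "length (cid A \<Delta>') = length \<Delta>'"
    using cmor_len[OF cm] by (auto simp: cid_def)
  have e1: "cthen A (cid A \<Delta>' @ [(k, \<alpha>, gs)]) (\<eta> @ [sid A as]) = \<eta> @ [(k, \<alpha>, gs)]"
    using lenth cthen_cid_left[OF cm ic] sthen_sid_right[OF s ic]
    by (simp add: cthen_append)
  have "lact A f a' (ract A \<Delta>' \<eta> (DAbs \<Delta> (Arr as b) p)) =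
      DAbs \<Delta>' a' (ract A (\<Delta>' @ [bs]) (cid A \<Delta>' @ [(k, \<alpha>, gs)]) (lact A g0 b' (ract A (\<Delta>' @ [as]) (\<eta> @ [sid A as]) p)))"
    by (simp add: g)
  also have "\<dots> = DAbs \<Delta>' a' (ract A (\<Delta>' @ [bs]) (cid A \<Delta>' @ [(k, \<alpha>, gs)]) (ract A (\<Delta>' @ [as]) (\<eta> @ [sid A as]) (lact A g0 b' p)))"
    using lact_ract[OF deriv_Abs.hyps c1 g(10) ic] by simp
  also have "\<dots> = DAbs \<Delta>' a' (ract A (\<Delta>' @ [bs]) (\<eta> @ [(k, \<alpha>, gs)]) (lact A g0 b' p))"
    using ract_comp[OF p1 c1 c2 ic] e1 by simp
  also have "\<dots> = DAbs \<Delta>' a' (lact A g0 b' (ract A (\<Delta>' @ [bs]) (\<eta> @ [(k, \<alpha>, gs)]) p))"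
    using lact_ract[OF deriv_Abs.hyps c5 g(10) ic] by simp
  finally have "phi (lact A f a' (ract A \<Delta>' \<eta> (DAbs \<Delta> (Arr as b) p))) =
      phi (lact A g0 b' (ract A (\<Delta>' @ [bs]) (\<eta> @ [(k, \<alpha>, gs)]) p))" by simp
  moreover have "act A C xs (Lam x M) \<eta> f (phi (DAbs \<Delta> (Arr as b) p)) = act A C (xs @ [x]) M (\<eta> @ [(k, \<alpha>, gs)]) g0 (phi p)"
    by (simp add: g act_Lam)
  moreover have "act A C (xs @ [x]) M (\<eta> @ [(k, \<alpha>, gs)]) g0 (phi p) = phi (lact A g0 b' (ract A (\<Delta>' @ [bs]) (\<eta> @ [(k, \<alpha>, gs)]) p))"
    using deriv_Abs.IH[OF c5 g(10) ic] .
  ultimately show ?case by simp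
next
  case (deriv_App xs p0 \<Gamma>0 M as a ps \<Gamma>s N \<Delta> \<theta>)
  note ic = deriv_App.prems(3)
  have d0: "dvctx p0 = \<Gamma>0" "dvty p0 = Arr as a" using deriv_App.hyps(1) deriv_det by blast+
  have o0: "cobj A (length xs) \<Gamma>0" "sobj A as" using deriv_objs[OF deriv_App.hyps(1)] by (auto simp: sobj_def)
  define F where "F = ArrM (length as) [0..<length as] (map (did A) as) f"
  have dF: "dmor A C F (Arr as a) (Arr as a')"
    unfolding F_def using o0 deriv_App.prems(2) ic
    by (intro dmor_Arr) (auto simp: inC_id sobj_def intro!: did_typed)
  have "act A C xs M (cid A \<Gamma>0) F (phi p0) = phi (lact A F (Arr as a') (ract A \<Gamma>0 (cid A \<Gamma>0) p0))"
    using deriv_App.IH(1)[OF cid_typed[OF ic o0(1)] dF ic] .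
  also have "\<dots> = phi (lact A F (Arr as a') p0)" using ract_id[OF deriv_App.hyps(1) ic] by simp
  finally have e: "act A C xs M (cid A \<Gamma>0) F (phi p0) = phi (lact A F (Arr as a') p0)" .
  show ?case using e d0 by (simp add: act_App appact_def F_def)
qed

lemma deriv_ctx: "deriv A C xs p \<Delta> M a \<Longrightarrow> dvctx p = \<Delta>" using deriv_det by blast
lemma deriv_ty: "deriv A C xs p \<Delta> M a \<Longrightarrow> dvty p = a" using deriv_det by blast

lemma car_phi: "FV M \<subseteq> set xs \<Longrightarrow> cobj A (length xs) \<Delta> \<Longrightarrow> dobj A a \<Longrightarrow> e \<in> car A C xs M \<Delta> a \<Longrightarrow>
   \<exists>p. deriv A C xs p \<Delta> M a \<and> phi p = e"
proof (induction M arbitrary: xs \<Delta> a e)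
  case (Var x)
  from Var.prems(4) obtain hs where e: "e = EMor hs"
    and cm: "cmor A C hs \<Delta> (map (\<lambda>j. if j = lastidx xs x then [a] else []) [0..<length xs])"
    by (auto simp: car_Var)
  have l: "length hs = length xs" "length \<Delta> = length xs" using cm Var.prems(2) by (auto simp: cmor_def cobj_def)
  have "deriv A C xs (DVar \<Delta> a (lastidx xs x) hs) \<Delta> (Var x) a"
  proof (rule deriv_Var)
    show "\<forall>j<length xs. smor A C (hs ! j) (\<Delta> ! j) (if j = lastidx xs x then [a] else [])"
      using cmorD[OF cm] l by auto
  qed (use Var.prems l in auto)
  then show ?case using e by auto
next
  case (Lam x M)
  show ?case
  proof (cases a)
    case (At o1)
    then show ?thesis using Lam.prems(4) by (simp add: car_Lam)
  next
    case (Arr as b)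
    have e: "e \<in> car A C (xs @ [x]) M (\<Delta> @ [as]) b" using Lam.prems(4) Arr by (simp add: car_Lam)
    have "cobj A (length (xs @ [x])) (\<Delta> @ [as])" "dobj A b" "FV M \<subseteq> set (xs @ [x])"
      using Lam.prems Arr by (auto simp: cobj_def sobj_def)
    then obtain p where "deriv A C (xs @ [x]) p (\<Delta> @ [as]) M b" "phi p = e"
      using Lam.IH e by blast
    then show ?thesis using Arr by (auto intro!: deriv_Abs)
  qed
next
  case (App M N)
  from App.prems(4) obtain as \<Gamma>s u vs \<theta> where e: "e = EApp as \<Gamma>s u vs \<theta>" "sobj A as" "length \<Gamma>s = Suc (length as)"
    "\<forall>\<Gamma>\<in>set \<Gamma>s. cobj A (length xs) \<Gamma>" "u \<in> car A C xs M (hd \<Gamma>s) (Arr as a)" "length vs = length as"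
    "\<forall>i<length as. vs ! i \<in> car A C xs N (\<Gamma>s ! Suc i) (as ! i)" "cmor A C \<theta> \<Delta> (ctensor (length xs) \<Gamma>s)"
    unfolding car_App appcar_def by blast
  have hd: "hd \<Gamma>s \<in> set \<Gamma>s" using e(3) by (cases \<Gamma>s) auto
  obtain p0 where p0: "deriv A C xs p0 (hd \<Gamma>s) M (Arr as a)" "phi p0 = u"
    using App.IH(1)[of xs "hd \<Gamma>s" "Arr as a" u] App.prems e hd by (auto simp: sobj_def)
  have "\<forall>i<length as. \<exists>p. deriv A C xs p (\<Gamma>s ! Suc i) N (as ! i) \<and> phi p = vs ! i"
  proof (intro allI impI)
    fix i assume i: "i < length as"
    have "\<Gamma>s ! Suc i \<in> set \<Gamma>s" using i e(3) by simp
    then show "\<exists>p. deriv A C xs p (\<Gamma>s ! Suc i) N (as ! i) \<and> phi p = vs ! i"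
      using App.IH(2)[of xs "\<Gamma>s ! Suc i" "as ! i" "vs ! i"] App.prems e i by (auto simp: sobj_def)
  qed
  then obtain pf where pf: "\<forall>i<length as. deriv A C xs (pf i) (\<Gamma>s ! Suc i) N (as ! i) \<and> phi (pf i) = vs ! i"
    by metis
  define ps where "ps = map pf [0..<length as]"
  have tl: "tl \<Gamma>s = map (\<lambda>i. \<Gamma>s ! Suc i) [0..<length as]" using e(3)
    by (intro nth_equalityI) (auto simp: nth_tl)
  have G: "\<Gamma>s = hd \<Gamma>s # tl \<Gamma>s" using e(3) by (cases \<Gamma>s) auto
  have d: "deriv A C xs (DApp \<Delta> a p0 ps \<theta>) \<Delta> (App M N) a"
  proof (rule deriv_App[where \<Gamma>s="tl \<Gamma>s"])
    show "cmor A C \<theta> \<Delta> (ctensor (length xs) (hd \<Gamma>s # tl \<Gamma>s))" using e(8) G by simp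
  qed (use p0 pf App.prems e(3) tl in \<open>auto simp: ps_def\<close>)
  have "\<forall>i<length as. dvctx (pf i) = \<Gamma>s ! Suc i" using pf deriv_ctx by blast
  then have "map dvctx ps = tl \<Gamma>s" using tl unfolding ps_def by simp
  moreover have "map phi ps = vs" using pf e(6) unfolding ps_def by (auto intro!: nth_equalityI)
  moreover have "dvctx p0 = hd \<Gamma>s" "dvty p0 = Arr as a" using p0 deriv_det by blast+
  ultimately have "phi (DApp \<Delta> a p0 ps \<theta>) = e" using e(1) p0(2) G by simp
  then show ?case using d by blast
qed

lemma dcong_typed: "dcong A C xs M p q \<Longrightarrow> \<exists>\<Delta> a. deriv A C xs p \<Delta> M a \<and> deriv A C xs q \<Delta> M a"
proof (induction rule: dcong.induct)
  case (dcong_trans xs M p q r)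
  then show ?case using deriv_det by metis
qed blast+

lemma dcong_same: "dcong A C xs M p q \<Longrightarrow> dvctx q = dvctx p \<and> dvty q = dvty p"
  using dcong_typed deriv_det by metis

lemma rel_refl: "x \<in> car A C xs M \<Delta> a \<Longrightarrow> (x, x) \<in> rel A C xs M \<Delta> a"
  using sem_equiv[of A C xs M \<Delta> a] unfolding equiv_def refl_on_def by blast
lemma rel_sym: "(x, y) \<in> rel A C xs M \<Delta> a \<Longrightarrow> (y, x) \<in> rel A C xs M \<Delta> a"
  using sem_equiv[of A C xs M \<Delta> a] unfolding equiv_def sym_def by blast
lemma rel_trans: "(x, y) \<in> rel A C xs M \<Delta> a \<Longrightarrow> (y, z) \<in> rel A C xs M \<Delta> a \<Longrightarrow> (x, z) \<in> rel A C xs M \<Delta> a"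
  using sem_equiv[of A C xs M \<Delta> a] unfolding equiv_def trans_def by blast
lemma rel_car: "(x, y) \<in> rel A C xs M \<Delta> a \<Longrightarrow> x \<in> car A C xs M \<Delta> a \<and> y \<in> car A C xs M \<Delta> a"
  using sem_equiv[of A C xs M \<Delta> a] unfolding equiv_def refl_on_def by blast

lemma rel_App_intro:
  "(e, e') \<in> appgen A C (length xs) (car A C xs M) (rel A C xs M) (act A C xs M) (car A C xs N) (rel A C xs N) (act A C xs N) \<Delta> a
   \<Longrightarrow> (e, e') \<in> rel A C xs (App M N) \<Delta> a"
  unfolding rel_App using appgen_sub by blast

lemma derivE_App':
  assumes "deriv A C xs (DApp \<Delta>' a' p0 ps \<eta>) \<Delta> (App M N) a"
  obtains as where "\<Delta>' = \<Delta>" "a' = a" "deriv A C xs p0 (dvctx p0) M (Arr as a)" "dvty p0 = Arr as a"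
    "length ps = length as"
    "\<forall>i<length as. deriv A C xs (ps ! i) (dvctx (ps ! i)) N (as ! i) \<and> dvty (ps ! i) = as ! i"
    "cobj A (length xs) \<Delta>" "cmor A C \<eta> \<Delta> (ctensor (length xs) (dvctx p0 # map dvctx ps))"
proof -
  from assms obtain \<Gamma>0 as \<Gamma>s where h: "\<Delta>' = \<Delta>" "a' = a" "deriv A C xs p0 \<Gamma>0 M (Arr as a)" "length ps = length as"
    "length \<Gamma>s = length as" "\<forall>i<length as. deriv A C xs (ps ! i) (\<Gamma>s ! i) N (as ! i)"
    "cobj A (length xs) \<Delta>" "cmor A C \<eta> \<Delta> (ctensor (length xs) (\<Gamma>0 # \<Gamma>s))"
    by (rule derivE_App) auto
  have "dvctx p0 = \<Gamma>0" "dvty p0 = Arr as a" using h(3) deriv_det by blast+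
  moreover have "\<forall>i<length as. dvctx (ps ! i) = \<Gamma>s ! i \<and> dvty (ps ! i) = as ! i" using h(6) deriv_det by blast
  moreover then have "map dvctx ps = \<Gamma>s" using h(4,5) by (intro nth_equalityI) auto
  ultimately show ?thesis using that h by auto
qed

lemma phi_App: "dvty p0 = Arr as a \<Longrightarrow> phi (DApp \<Delta> b p0 ps \<eta>) = EApp as (dvctx p0 # map dvctx ps) (phi p0) (map phi ps) \<eta>"
  by simp

lemma dcong_rel: "dcong A C xs M p q \<Longrightarrow> is_cat A \<Longrightarrow> (phi p, phi q) \<in> rel A C xs M (dvctx p) (dvty p)"
proof (induction rule: dcong.induct)
  case (dcong_refl xs p \<Delta> M a)
  then show ?case using phi_car rel_refl deriv_det by metis
next
  case (dcong_sym xs M p q)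
  then show ?case using dcong_same rel_sym by metis
next
  case (dcong_trans xs M p q r)
  then show ?case using dcong_same rel_trans by metis
next
  case (dcong_Abs xs x M p q \<Delta> a)
  from dcong_Abs.hyps(2) obtain as b where ab: "a = Arr as b" "deriv A C (xs @ [x]) p (\<Delta> @ [as]) M b"
    by (rule derivE_Lam) auto
  have "dvctx p = \<Delta> @ [as]" "dvty p = b" using ab deriv_det by blast+
  then show ?case using dcong_Abs.IH dcong_Abs.prems ab by (simp add: rel_Lam)
next
  case (dcong_App xs M p0 q0 qs ps N \<Delta> a \<eta>)
  note ic = dcong_App.prems
  have dP: "deriv A C xs (DApp \<Delta> a p0 ps \<eta>) \<Delta> (App M N) a" by fact
  have dQ: "deriv A C xs (DApp \<Delta> a q0 qs \<eta>) \<Delta> (App M N) a" by fact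
  have d0: "dcong A C xs M p0 q0" by fact
  have lq: "length qs = length ps" by fact
  obtain as where P: "deriv A C xs p0 (dvctx p0) M (Arr as a)" "dvty p0 = Arr as a"
    "length ps = length as"
    "\<forall>i<length as. deriv A C xs (ps ! i) (dvctx (ps ! i)) N (as ! i) \<and> dvty (ps ! i) = as ! i"
    by (rule derivE_App'[OF dP])
  have sq0: "dvctx q0 = dvctx p0" "dvty q0 = dvty p0" using dcong_same d0 by blast+
  have IHi: "\<forall>i<length ps. dcong A C xs N (ps ! i) (qs ! i) \<and>
       (phi (ps ! i), phi (qs ! i)) \<in> rel A C xs N (dvctx (ps ! i)) (dvty (ps ! i))"
    using dcong_App.IH(2) ic by blast
  have sqi: "map dvctx qs = map dvctx ps"
  proof (rule nth_equalityI)
    fix i assume i: "i < length (map dvctx qs)"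
    have dd: "dcong A C xs N (ps ! i) (qs ! i)" using IHi lq i by simp
    show "map dvctx qs ! i = map dvctx ps ! i" using dcong_same[OF dd] i lq by simp
  qed (simp add: lq)
  have r0: "(phi p0, phi q0) \<in> rel A C xs M (dvctx p0) (Arr as a)" using dcong_App.IH(1) ic P(2) by simp
  let ?G = "dvctx p0 # map dvctx ps"
  have "(phi (DApp \<Delta> a p0 ps \<eta>), phi (DApp \<Delta> a q0 qs \<eta>)) \<in>
      appgen A C (length xs) (car A C xs M) (rel A C xs M) (act A C xs M) (car A C xs N) (rel A C xs N) (act A C xs N) \<Delta> a"
    unfolding appgen_def
  proof (intro CollectI case_prodI conjI disjI1)
    show "phi (DApp \<Delta> a p0 ps \<eta>) \<in> appcar A C (length xs) (car A C xs M) (car A C xs N) \<Delta> a"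
      using phi_car[OF dP] by (simp add: car_App)
    show "phi (DApp \<Delta> a q0 qs \<eta>) \<in> appcar A C (length xs) (car A C xs M) (car A C xs N) \<Delta> a"
      using phi_car[OF dQ] by (simp add: car_App)
    show "\<exists>as' \<Gamma>s u vs u' vs' \<theta>. phi (DApp \<Delta> a p0 ps \<eta>) = EApp as' \<Gamma>s u vs \<theta> \<and>
        phi (DApp \<Delta> a q0 qs \<eta>) = EApp as' \<Gamma>s u' vs' \<theta> \<and>
        (u, u') \<in> rel A C xs M (hd \<Gamma>s) (Arr as' a) \<and> length vs' = length vs \<and>
        (\<forall>i<length vs. (vs ! i, vs' ! i) \<in> rel A C xs N (\<Gamma>s ! Suc i) (as' ! i))"
    proof (intro exI conjI)
      show "phi (DApp \<Delta> a p0 ps \<eta>) = EApp as ?G (phi p0) (map phi ps) \<eta>" using P(2) by simp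
      show "phi (DApp \<Delta> a q0 qs \<eta>) = EApp as ?G (phi q0) (map phi qs) \<eta>" using P(2) sq0 sqi by simp
      show "(phi p0, phi q0) \<in> rel A C xs M (hd ?G) (Arr as a)" using r0 by simp
      show "length (map phi qs) = length (map phi ps)" using lq by simp
      show "\<forall>i<length (map phi ps). (map phi ps ! i, map phi qs ! i) \<in> rel A C xs N (?G ! Suc i) (as ! i)"
        using IHi P(3,4) lq by auto
    qed
  qed
  then show ?case by (simp add: rel_App_intro)
next
  case (dcong_i k \<alpha> fs as bs lhs \<Delta> a p0 ps \<eta> xs rhs M N)
  note ic = dcong_i.prems
  note s = dcong_i.hyps(1)
  have sm: "sobj A as" "sobj A bs" "k = length as" "length \<alpha> = length bs" "length fs = length bs" "inC C k \<alpha>"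
     "\<forall>i<length bs. \<alpha> ! i < k \<and> dmor A C (fs ! i) (as ! (\<alpha> ! i)) (bs ! i)"
    using s by (auto simp: smor_def')
  define F where "F = ArrM k \<alpha> fs (did A a)"
  obtain as' where R: "deriv A C xs (lact A F (Arr as a) p0) (dvctx p0) M (Arr as' a)" "Arr as a = Arr as' a"
    "length ps = length as'"
    "\<forall>i<length as'. deriv A C xs (ps ! i) (dvctx (ps ! i)) N (as' ! i) \<and> dvty (ps ! i) = as' ! i"
    "cmor A C \<eta> \<Delta> (ctensor (length xs) (dvctx p0 # map dvctx ps))"
    by (rule derivE_App'[OF dcong_i.hyps(5)[unfolded dcong_i.hyps(3)]]) (auto simp: F_def)
  have as': "as' = as" using R(2) by simp
  define ps' where "ps' = map (\<lambda>j. lact A (fs ! j) (bs ! j) (ps ! (\<alpha> ! j))) [0..<length bs]"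
  define \<eta>' where "\<eta>' = cthen A \<eta> (cmtensor (length xs) [cid A (dvctx p0), astar A (length xs) (map dvctx ps) \<alpha>])"
  obtain bs' where L: "deriv A C xs p0 (dvctx p0) M (Arr bs' a)" "dvty p0 = Arr bs' a"
    "length ps' = length bs'"
    "\<forall>i<length bs'. deriv A C xs (ps' ! i) (dvctx (ps' ! i)) N (bs' ! i) \<and> dvty (ps' ! i) = bs' ! i"
    by (rule derivE_App'[OF dcong_i.hyps(4)[unfolded dcong_i.hyps(2), folded ps'_def \<eta>'_def]])
  have bs': "bs' = bs"
  proof (rule nth_equalityI)
    show "length bs' = length bs" using L(3) by (simp add: ps'_def)
    fix i assume "i < length bs'"
    then show "bs' ! i = bs ! i" using L(3,4) by (auto simp: ps'_def)
  qed
  have ao: "dobj A a" using deriv_objs[OF dcong_i.hyps(4)] by simp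
  have dF: "dmor A C F (Arr bs a) (Arr as a)"
    unfolding F_def using sm ao ic by (intro dmor_Arr) (auto intro: did_typed)
  have co0: "cobj A (length xs) (dvctx p0)" using deriv_objs[OF L(1)] by simp
  have phiF: "act A C xs M (cid A (dvctx p0)) F (phi p0) = phi (lact A F (Arr as a) p0)"
    using phi_act[OF L(1) cid_typed[OF ic co0] dF[folded bs'] ic] ract_id[OF L(1) ic] bs' by simp
  have aj: "\<alpha> ! j < length ps" if "j < length bs" for j using sm that R(3) as' by auto
  have phij: "act A C xs N (cid A (dvctx (ps ! (\<alpha> ! j)))) (fs ! j) (phi (ps ! (\<alpha> ! j))) = phi (ps' ! j)"
    if j: "j < length bs" for j
  proof -
    have d: "deriv A C xs (ps ! (\<alpha> ! j)) (dvctx (ps ! (\<alpha> ! j))) N (as ! (\<alpha> ! j))"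
      using R(4) aj[OF j] R(3) as' by auto
    have co: "cobj A (length xs) (dvctx (ps ! (\<alpha> ! j)))" using deriv_objs[OF d] by simp
    show ?thesis using phi_act[OF d cid_typed[OF ic co] _ ic, of "fs ! j" "bs ! j"] sm j ract_id[OF d ic]
      by (simp add: ps'_def)
  qed
  let ?G = "dvctx p0 # map dvctx ps"
  have "(phi lhs, phi rhs) \<in>
      appgen A C (length xs) (car A C xs M) (rel A C xs M) (act A C xs M) (car A C xs N) (rel A C xs N) (act A C xs N) \<Delta> a"
    unfolding appgen_def
  proof (intro CollectI case_prodI conjI disjI2)
    show "phi lhs \<in> appcar A C (length xs) (car A C xs M) (car A C xs N) \<Delta> a"
      using phi_car[OF dcong_i.hyps(4)] by (simp add: car_App)
    show "phi rhs \<in> appcar A C (length xs) (car A C xs M) (car A C xs N) \<Delta> a"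
      using phi_car[OF dcong_i.hyps(5)] by (simp add: car_App)
    show "\<exists>as bs k \<alpha> fs \<Gamma>s u vs \<eta>. smor A C (k, \<alpha>, fs) as bs \<and>
         phi lhs = EApp bs (hd \<Gamma>s # map (\<lambda>j. \<Gamma>s ! Suc (\<alpha> ! j)) [0..<length bs]) u
               (map (\<lambda>j. act A C xs N (cid A (\<Gamma>s ! Suc (\<alpha> ! j))) (fs ! j) (vs ! (\<alpha> ! j))) [0..<length bs])
               (cthen A \<eta> (cmtensor (length xs) [cid A (hd \<Gamma>s), astar A (length xs) (tl \<Gamma>s) \<alpha>])) \<and>
         phi rhs = EApp as \<Gamma>s (act A C xs M (cid A (hd \<Gamma>s)) (ArrM k \<alpha> fs (did A a)) u) vs \<eta>"
    proof (intro exI conjI)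
      show "smor A C (k, \<alpha>, fs) as bs" by (rule s)
      show "phi lhs = EApp bs (hd ?G # map (\<lambda>j. ?G ! Suc (\<alpha> ! j)) [0..<length bs]) (phi p0)
               (map (\<lambda>j. act A C xs N (cid A (?G ! Suc (\<alpha> ! j))) (fs ! j) (map phi ps ! (\<alpha> ! j))) [0..<length bs])
               (cthen A \<eta> (cmtensor (length xs) [cid A (hd ?G), astar A (length xs) (tl ?G) \<alpha>]))"
        unfolding dcong_i.hyps(2) ps'_def[symmetric] \<eta>'_def[symmetric]
        using L(2) bs' phij aj by (auto simp: ps'_def \<eta>'_def intro!: nth_equalityI)
      show "phi rhs = EApp as ?G (act A C xs M (cid A (hd ?G)) (ArrM k \<alpha> fs (did A a)) (phi p0)) (map phi ps) \<eta>"
        unfolding dcong_i.hyps(3) using phiF by (simp add: F_def)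
    qed
  qed
  then show ?case using deriv_det[OF dcong_i.hyps(4)] by (simp add: rel_App_intro)
next
  case (dcong_ii \<theta>s ps \<Gamma>s p0 lhs \<Delta> a \<eta> rhs xs M N)
  note ic = dcong_ii.prems
  note lth = dcong_ii.hyps(1) and lG = dcong_ii.hyps(2) and cms = dcong_ii.hyps(3)
  obtain as where R: "deriv A C xs p0 (dvctx p0) M (Arr as a)" "dvty p0 = Arr as a"
    "length ps = length as"
    "\<forall>i<length as. deriv A C xs (ps ! i) (dvctx (ps ! i)) N (as ! i) \<and> dvty (ps ! i) = as ! i"
    by (rule derivE_App'[OF dcong_ii.hyps(7)[unfolded dcong_ii.hyps(5)]])
  have ao: "dobj A (Arr as a)" using deriv_objs[OF R(1)] by simp
  have c0: "cmor A C (\<theta>s ! 0) (\<Gamma>s ! 0) (dvctx p0)" using cms lth by auto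
  have e0: "act A C xs M (hd \<theta>s) (did A (Arr as a)) (phi p0) = phi (ract A (\<Gamma>s ! 0) (\<theta>s ! 0) p0)"
  proof -
    have "hd \<theta>s = \<theta>s ! 0" using lth by (cases \<theta>s) auto
    moreover have "act A C xs M (\<theta>s ! 0) (did A (Arr as a)) (phi p0) =
        phi (lact A (did A (Arr as a)) (Arr as a) (ract A (\<Gamma>s ! 0) (\<theta>s ! 0) p0))"
      by (rule phi_act[OF R(1) c0 did_typed[OF ic ao] ic])
    moreover have "lact A (did A (Arr as a)) (Arr as a) (ract A (\<Gamma>s ! 0) (\<theta>s ! 0) p0) = ract A (\<Gamma>s ! 0) (\<theta>s ! 0) p0"
      by (rule lact_id[OF ract_typed[OF R(1) c0 ic] ic])
    ultimately show ?thesis by simp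
  qed
  have ei: "act A C xs N (\<theta>s ! Suc i) (did A (as ! i)) (phi (ps ! i)) = phi (ract A (\<Gamma>s ! Suc i) (\<theta>s ! Suc i) (ps ! i))"
    if i: "i < length as" for i
  proof -
    have d: "deriv A C xs (ps ! i) (dvctx (ps ! i)) N (as ! i)" using R(4) i by simp
    have ci: "cmor A C (\<theta>s ! Suc i) (\<Gamma>s ! Suc i) (dvctx (ps ! i))" using cms lth i R(3) by auto
    have ao: "dobj A (as ! i)" using deriv_objs[OF d] by simp
    have "act A C xs N (\<theta>s ! Suc i) (did A (as ! i)) (phi (ps ! i)) =
        phi (lact A (did A (as ! i)) (as ! i) (ract A (\<Gamma>s ! Suc i) (\<theta>s ! Suc i) (ps ! i)))"
      by (rule phi_act[OF d ci did_typed[OF ic ao] ic])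
    moreover have "lact A (did A (as ! i)) (as ! i) (ract A (\<Gamma>s ! Suc i) (\<theta>s ! Suc i) (ps ! i)) = ract A (\<Gamma>s ! Suc i) (\<theta>s ! Suc i) (ps ! i)"
      by (rule lact_id[OF ract_typed[OF d ci ic] ic])
    ultimately show ?thesis by simp
  qed
  have Geq: "\<Gamma>s ! 0 # map (\<lambda>i. \<Gamma>s ! Suc i) [0..<length ps] = \<Gamma>s"
  proof (rule nth_equalityI)
    show "length (\<Gamma>s ! 0 # map (\<lambda>i. \<Gamma>s ! Suc i) [0..<length ps]) = length \<Gamma>s" using lth lG by simp
    fix i assume "i < length (\<Gamma>s ! 0 # map (\<lambda>i. \<Gamma>s ! Suc i) [0..<length ps])"
    then show "(\<Gamma>s ! 0 # map (\<lambda>i. \<Gamma>s ! Suc i) [0..<length ps]) ! i = \<Gamma>s ! i"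
      by (cases i) auto
  qed
  let ?G' = "dvctx p0 # map dvctx ps"
  have X: "\<exists>as \<Gamma>s \<Gamma>s' \<theta>s u vs \<eta>. length \<theta>s = length \<Gamma>s \<and> length \<Gamma>s' = length \<Gamma>s \<and>
       (\<forall>j<length \<Gamma>s. cmor A C (\<theta>s ! j) (\<Gamma>s ! j) (\<Gamma>s' ! j)) \<and>
       phi lhs = EApp as \<Gamma>s (act A C xs M (hd \<theta>s) (did A (Arr as a)) u)
             (map (\<lambda>i. act A C xs N (\<theta>s ! Suc i) (did A (as ! i)) (vs ! i)) [0..<length as]) \<eta> \<and>
       phi rhs = EApp as \<Gamma>s' u vs (cthen A \<eta> (cmtensor (length xs) \<theta>s))"
  proof (intro exI conjI)
    show "length \<theta>s = length \<Gamma>s" using lG by simp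
    show "length ?G' = length \<Gamma>s" using lG lth by simp
    show "\<forall>j<length \<Gamma>s. cmor A C (\<theta>s ! j) (\<Gamma>s ! j) (?G' ! j)" using cms lG by simp
    have "phi lhs = EApp as (\<Gamma>s ! 0 # map (\<lambda>i. \<Gamma>s ! Suc i) [0..<length ps]) (phi (ract A (\<Gamma>s ! 0) (\<theta>s ! 0) p0))
         (map (\<lambda>i. phi (ract A (\<Gamma>s ! Suc i) (\<theta>s ! Suc i) (ps ! i))) [0..<length ps]) \<eta>"
      unfolding dcong_ii.hyps(4) using R(2) by (simp add: comp_def)
    then show "phi lhs = EApp as \<Gamma>s (act A C xs M (hd \<theta>s) (did A (Arr as a)) (phi p0))
             (map (\<lambda>i. act A C xs N (\<theta>s ! Suc i) (did A (as ! i)) (map phi ps ! i)) [0..<length as]) \<eta>"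
      using Geq e0 ei R(3) by simp
    show "phi rhs = EApp as ?G' (phi p0) (map phi ps) (cthen A \<eta> (cmtensor (length xs) \<theta>s))"
      unfolding dcong_ii.hyps(5) using R(2) by simp
  qed
  have "(phi lhs, phi rhs) \<in>
      appgen A C (length xs) (car A C xs M) (rel A C xs M) (act A C xs M) (car A C xs N) (rel A C xs N) (act A C xs N) \<Delta> a"
    unfolding appgen_def
  proof (intro CollectI case_prodI conjI)
    show "phi lhs \<in> appcar A C (length xs) (car A C xs M) (car A C xs N) \<Delta> a"
      using phi_car[OF dcong_ii.hyps(6)] by (simp add: car_App)
    show "phi rhs \<in> appcar A C (length xs) (car A C xs M) (car A C xs N) \<Delta> a"
      using phi_car[OF dcong_ii.hyps(7)] by (simp add: car_App)
  qed (rule disjI2[OF disjI1[OF X]])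
  then show ?case using deriv_det[OF dcong_ii.hyps(6)] by (simp add: rel_App_intro)
qed

lemma phi_ract_did: "deriv A C xs p \<Gamma>' M b \<Longrightarrow> cmor A C \<theta> \<Gamma> \<Gamma>' \<Longrightarrow> is_cat A \<Longrightarrow>
   act A C xs M \<theta> (did A b) (phi p) = phi (ract A \<Gamma> \<theta> p)"
  using phi_act[of A C xs p \<Gamma>' M b \<theta> \<Gamma> "did A b" b] did_typed[of A b C] deriv_objs[of A C xs p \<Gamma>' M b]
    lact_id[OF ract_typed] by metis

lemma phi_lact_cid: "deriv A C xs p \<Gamma> M b \<Longrightarrow> dmor A C f b b' \<Longrightarrow> is_cat A \<Longrightarrow>
   act A C xs M (cid A \<Gamma>) f (phi p) = phi (lact A f b' p)"
  using phi_act[of A C xs p \<Gamma> M b "cid A \<Gamma>" \<Gamma> f b'] cid_typed[of A "length xs" \<Gamma> C] deriv_objs[of A C xs p \<Gamma> M b]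
    ract_id by metis

lemma deriv_App_shape: "deriv A C xs P \<Delta> (App M N) a \<Longrightarrow> \<exists>p0 ps \<eta>. P = DApp \<Delta> a p0 ps \<eta>"
  by (erule derivE_App) auto

lemma list_Suc_eq: "length G = Suc n \<Longrightarrow> G ! 0 # map (\<lambda>i. G ! Suc i) [0..<n] = G"
proof (rule nth_equalityI)
  fix i assume "length G = Suc n" "i < length (G ! 0 # map (\<lambda>i. G ! Suc i) [0..<n])"
  then show "(G ! 0 # map (\<lambda>i. G ! Suc i) [0..<n]) ! i = G ! i" by (cases i) auto
qed simp

lemma gen_dcong:
  assumes ic: "is_cat A"
    and IHM: "\<And>\<Gamma> b p q. deriv A C xs p \<Gamma> M b \<Longrightarrow> deriv A C xs q \<Gamma> M b \<Longrightarrow> (phi p, phi q) \<in> rel A C xs M \<Gamma> b \<Longrightarrow> dcong A C xs M p q"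
    and IHN: "\<And>\<Gamma> b p q. deriv A C xs p \<Gamma> N b \<Longrightarrow> deriv A C xs q \<Gamma> N b \<Longrightarrow> (phi p, phi q) \<in> rel A C xs N \<Gamma> b \<Longrightarrow> dcong A C xs N p q"
    and dP: "deriv A C xs P \<Delta> (App M N) a" and dQ: "deriv A C xs Q \<Delta> (App M N) a"
    and G: "(phi P, phi Q) \<in> appgen A C (length xs) (car A C xs M) (rel A C xs M) (act A C xs M) (car A C xs N) (rel A C xs N) (act A C xs N) \<Delta> a"
  shows "dcong A C xs (App M N) P Q"
proof -
  obtain p0 ps \<eta>P where P: "P = DApp \<Delta> a p0 ps \<eta>P" using deriv_App_shape[OF dP] by blast
  obtain q0 qs \<eta>Q where Q: "Q = DApp \<Delta> a q0 qs \<eta>Q" using deriv_App_shape[OF dQ] by blast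
  obtain asP where PP: "deriv A C xs p0 (dvctx p0) M (Arr asP a)" "dvty p0 = Arr asP a"
    "length ps = length asP"
    "\<forall>i<length asP. deriv A C xs (ps ! i) (dvctx (ps ! i)) N (asP ! i) \<and> dvty (ps ! i) = asP ! i"
    "cobj A (length xs) \<Delta>" "cmor A C \<eta>P \<Delta> (ctensor (length xs) (dvctx p0 # map dvctx ps))"
    by (rule derivE_App'[OF dP[unfolded P]])
  obtain asQ where QQ: "deriv A C xs q0 (dvctx q0) M (Arr asQ a)" "dvty q0 = Arr asQ a"
    "length qs = length asQ"
    "\<forall>i<length asQ. deriv A C xs (qs ! i) (dvctx (qs ! i)) N (asQ ! i) \<and> dvty (qs ! i) = asQ ! i"
    "cobj A (length xs) \<Delta>" "cmor A C \<eta>Q \<Delta> (ctensor (length xs) (dvctx q0 # map dvctx qs))"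
    by (rule derivE_App'[OF dQ[unfolded Q]])
  have phiP: "phi P = EApp asP (dvctx p0 # map dvctx ps) (phi p0) (map phi ps) \<eta>P" using P PP(2) by simp
  have phiQ: "phi Q = EApp asQ (dvctx q0 # map dvctx qs) (phi q0) (map phi qs) \<eta>Q" using Q QQ(2) by simp
  from G consider (c1) "\<exists>as \<Gamma>s u vs u' vs' \<theta>. phi P = EApp as \<Gamma>s u vs \<theta> \<and> phi Q = EApp as \<Gamma>s u' vs' \<theta> \<and>
         (u, u') \<in> rel A C xs M (hd \<Gamma>s) (Arr as a) \<and> length vs' = length vs \<and>
         (\<forall>i<length vs. (vs ! i, vs' ! i) \<in> rel A C xs N (\<Gamma>s ! Suc i) (as ! i))"
    | (c2) "\<exists>as \<Gamma>s \<Gamma>s' \<theta>s u vs \<eta>. length \<theta>s = length \<Gamma>s \<and> length \<Gamma>s' = length \<Gamma>s \<and>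
         (\<forall>j<length \<Gamma>s. cmor A C (\<theta>s ! j) (\<Gamma>s ! j) (\<Gamma>s' ! j)) \<and>
         phi P = EApp as \<Gamma>s (act A C xs M (hd \<theta>s) (did A (Arr as a)) u)
               (map (\<lambda>i. act A C xs N (\<theta>s ! Suc i) (did A (as ! i)) (vs ! i)) [0..<length as]) \<eta> \<and>
         phi Q = EApp as \<Gamma>s' u vs (cthen A \<eta> (cmtensor (length xs) \<theta>s))"
    | (c3) "\<exists>as bs k \<alpha> fs \<Gamma>s u vs \<eta>. smor A C (k, \<alpha>, fs) as bs \<and>
         phi P = EApp bs (hd \<Gamma>s # map (\<lambda>j. \<Gamma>s ! Suc (\<alpha> ! j)) [0..<length bs]) u
               (map (\<lambda>j. act A C xs N (cid A (\<Gamma>s ! Suc (\<alpha> ! j))) (fs ! j) (vs ! (\<alpha> ! j))) [0..<length bs])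
               (cthen A \<eta> (cmtensor (length xs) [cid A (hd \<Gamma>s), astar A (length xs) (tl \<Gamma>s) \<alpha>])) \<and>
         phi Q = EApp as \<Gamma>s (act A C xs M (cid A (hd \<Gamma>s)) (ArrM k \<alpha> fs (did A a)) u) vs \<eta>"
    unfolding appgen_def mem_Collect_eq prod.case by blast
  then show ?thesis
  proof cases
    case c1
    then obtain as \<Gamma>s u vs u' vs' \<theta> where h: "phi P = EApp as \<Gamma>s u vs \<theta>" "phi Q = EApp as \<Gamma>s u' vs' \<theta>"
         "(u, u') \<in> rel A C xs M (hd \<Gamma>s) (Arr as a)" "length vs' = length vs"
         "\<forall>i<length vs. (vs ! i, vs' ! i) \<in> rel A C xs N (\<Gamma>s ! Suc i) (as ! i)" by blast
    have e: "asP = as" "asQ = as" "dvctx p0 # map dvctx ps = \<Gamma>s" "dvctx q0 # map dvctx qs = \<Gamma>s"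
      "phi p0 = u" "phi q0 = u'" "map phi ps = vs" "map phi qs = vs'" "\<eta>P = \<theta>" "\<eta>Q = \<theta>"
      using h(1,2) phiP phiQ by auto
    have d0: "dcong A C xs M p0 q0"
      using IHM[of p0 "dvctx p0" "Arr as a" q0] PP(1) QQ(1) e h(3) by auto
    have lq: "length qs = length ps" using PP(3) QQ(3) e by simp
    have mctx: "map dvctx qs = map dvctx ps" using e(3,4) by (metis list.inject)
    have di: "\<forall>i<length ps. dcong A C xs N (ps ! i) (qs ! i)"
    proof (intro allI impI)
      fix i assume i: "i < length ps"
      have c: "dvctx (qs ! i) = dvctx (ps ! i)" using mctx i lq by (metis nth_map)
      have r: "(phi (ps ! i), phi (qs ! i)) \<in> rel A C xs N (\<Gamma>s ! Suc i) (as ! i)"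
        using h(5) e(7,8) i lq by auto
      have "\<Gamma>s ! Suc i = dvctx (ps ! i)" using e(3) i by auto
      then show "dcong A C xs N (ps ! i) (qs ! i)"
        using IHN[of "ps ! i" "dvctx (ps ! i)" "as ! i" "qs ! i"] PP(3,4) QQ(4) e(1,2) i lq c r by auto
    qed
    show ?thesis unfolding P Q using dcong_App[OF d0 lq di] dP[unfolded P] dQ[unfolded Q] e(9,10) by simp
  next
    case c2
    then obtain as \<Gamma>s \<Gamma>s' \<theta>s u vs \<eta> where h: "length \<theta>s = length \<Gamma>s" "length \<Gamma>s' = length \<Gamma>s"
         "\<forall>j<length \<Gamma>s. cmor A C (\<theta>s ! j) (\<Gamma>s ! j) (\<Gamma>s' ! j)"
         "phi P = EApp as \<Gamma>s (act A C xs M (hd \<theta>s) (did A (Arr as a)) u)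
               (map (\<lambda>i. act A C xs N (\<theta>s ! Suc i) (did A (as ! i)) (vs ! i)) [0..<length as]) \<eta>"
         "phi Q = EApp as \<Gamma>s' u vs (cthen A \<eta> (cmtensor (length xs) \<theta>s))" by blast
    have e: "asP = as" "asQ = as" "dvctx p0 # map dvctx ps = \<Gamma>s" "dvctx q0 # map dvctx qs = \<Gamma>s'"
      "phi p0 = act A C xs M (hd \<theta>s) (did A (Arr as a)) u" "phi q0 = u"
      "map phi ps = map (\<lambda>i. act A C xs N (\<theta>s ! Suc i) (did A (as ! i)) (vs ! i)) [0..<length as]"
      "map phi qs = vs" "\<eta>P = \<eta>" "\<eta>Q = cthen A \<eta> (cmtensor (length xs) \<theta>s)"
      using h(4,5) phiP phiQ by auto
    have lq: "length qs = length as" using QQ(3) e by simp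
    have lG: "length \<Gamma>s = Suc (length qs)" using e(3) PP(3) e(1) lq by auto
    have lth: "length \<theta>s = Suc (length qs)" using h(1) lG by simp
    have cq0: "dvctx q0 = \<Gamma>s' ! 0" using e(4) by auto
    have cqi: "dvctx (qs ! i) = \<Gamma>s' ! Suc i" if "i < length qs" for i using e(4) that by auto
    have c0: "cmor A C (\<theta>s ! 0) (\<Gamma>s ! 0) (dvctx q0)" using h(3) lG cq0 by auto
    have ci: "cmor A C (\<theta>s ! Suc i) (\<Gamma>s ! Suc i) (dvctx (qs ! i))" if "i < length qs" for i
      using h(3) lG cqi that by auto
    define L where "L = DApp \<Delta> a (ract A (\<Gamma>s ! 0) (\<theta>s ! 0) q0)
       (map (\<lambda>i. ract A (\<Gamma>s ! Suc i) (\<theta>s ! Suc i) (qs ! i)) [0..<length qs]) \<eta>"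
    have Gs: "\<Gamma>s ! 0 # map (\<lambda>i. \<Gamma>s ! Suc i) [0..<length qs] = \<Gamma>s" using list_Suc_eq[OF lG] .
    have dL: "deriv A C xs L \<Delta> (App M N) a" unfolding L_def
    proof (rule deriv_App[where \<Gamma>s="map (\<lambda>i. \<Gamma>s ! Suc i) [0..<length qs]" and as=as])
      show "deriv A C xs (ract A (\<Gamma>s ! 0) (\<theta>s ! 0) q0) (\<Gamma>s ! 0) M (Arr as a)"
        using ract_typed[OF QQ(1) c0 ic] e(2) by simp
      show "\<forall>i<length as. deriv A C xs (map (\<lambda>i. ract A (\<Gamma>s ! Suc i) (\<theta>s ! Suc i) (qs ! i)) [0..<length qs] ! i)
           (map (\<lambda>i. \<Gamma>s ! Suc i) [0..<length qs] ! i) N (as ! i)"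
      proof (intro allI impI)
        fix i assume i: "i < length as"
        have "deriv A C xs (qs ! i) (dvctx (qs ! i)) N (as ! i)" using QQ(4) e(2) i by simp
        then show "deriv A C xs (map (\<lambda>i. ract A (\<Gamma>s ! Suc i) (\<theta>s ! Suc i) (qs ! i)) [0..<length qs] ! i)
           (map (\<lambda>i. \<Gamma>s ! Suc i) [0..<length qs] ! i) N (as ! i)"
          using ract_typed[OF _ ci[of i] ic] i lq by simp
      qed
      show "cobj A (length xs) \<Delta>" using PP(5) .
      show "cmor A C \<eta> \<Delta> (ctensor (length xs) (\<Gamma>s ! 0 # map (\<lambda>i. \<Gamma>s ! Suc i) [0..<length qs]))"
        using PP(6) e(3,9) Gs by simp
    qed (use lq in auto)
    have "phi L = phi P"
    proof -
      have "phi (ract A (\<Gamma>s ! 0) (\<theta>s ! 0) q0) = act A C xs M (hd \<theta>s) (did A (Arr as a)) u"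
        using phi_ract_did[OF QQ(1) c0 ic] e(2,6) lth by (cases \<theta>s) auto
      moreover have "map (\<lambda>i. phi (ract A (\<Gamma>s ! Suc i) (\<theta>s ! Suc i) (qs ! i))) [0..<length qs] =
          map (\<lambda>i. act A C xs N (\<theta>s ! Suc i) (did A (as ! i)) (vs ! i)) [0..<length as]"
      proof (rule nth_equalityI)
        fix i assume i: "i < length (map (\<lambda>i. phi (ract A (\<Gamma>s ! Suc i) (\<theta>s ! Suc i) (qs ! i))) [0..<length qs])"
        have d: "deriv A C xs (qs ! i) (dvctx (qs ! i)) N (as ! i)" using QQ(4) e(2) i lq by simp
        have v: "vs ! i = phi (qs ! i)" using e(8) i by auto
        show "map (\<lambda>i. phi (ract A (\<Gamma>s ! Suc i) (\<theta>s ! Suc i) (qs ! i))) [0..<length qs] ! i =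
          map (\<lambda>i. act A C xs N (\<theta>s ! Suc i) (did A (as ! i)) (vs ! i)) [0..<length as] ! i"
          using phi_ract_did[OF d ci[of i] ic] i lq v by simp
      qed (use lq in simp)
      ultimately show ?thesis unfolding L_def using h(4) Gs QQ(2) e(2) by (simp add: comp_def)
    qed
    then have LP: "L = P" using phi_inj[OF dL dP] by simp
    have "dcong A C xs (App M N) L Q"
      unfolding Q
    proof (rule dcong_ii[where \<theta>s=\<theta>s and \<Gamma>s=\<Gamma>s])
      show "length \<theta>s = Suc (length qs)" by (rule lth)
      show "length \<Gamma>s = length \<theta>s" using h(1) by simp
      show "\<forall>j<length \<theta>s. cmor A C (\<theta>s ! j) (\<Gamma>s ! j) ((dvctx q0 # map dvctx qs) ! j)"
        using h(1,3) e(4) by simp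
      show "L = DApp \<Delta> a (ract A (\<Gamma>s ! 0) (\<theta>s ! 0) q0)
            (map (\<lambda>i. ract A (\<Gamma>s ! Suc i) (\<theta>s ! Suc i) (qs ! i)) [0..<length qs]) \<eta>" by (simp add: L_def)
      show "DApp \<Delta> a q0 qs \<eta>Q = DApp \<Delta> a q0 qs (cthen A \<eta> (cmtensor (length xs) \<theta>s))" using e(10) by simp
      show "deriv A C xs L \<Delta> (App M N) a" by (rule dL)
      show "deriv A C xs (DApp \<Delta> a q0 qs \<eta>Q) \<Delta> (App M N) a" using dQ Q by simp
    qed
    then show ?thesis using LP by simp
  next
    case c3
    then obtain as bs k \<alpha> fs \<Gamma>s u vs \<eta> where h: "smor A C (k, \<alpha>, fs) as bs"
         "phi P = EApp bs (hd \<Gamma>s # map (\<lambda>j. \<Gamma>s ! Suc (\<alpha> ! j)) [0..<length bs]) u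
               (map (\<lambda>j. act A C xs N (cid A (\<Gamma>s ! Suc (\<alpha> ! j))) (fs ! j) (vs ! (\<alpha> ! j))) [0..<length bs])
               (cthen A \<eta> (cmtensor (length xs) [cid A (hd \<Gamma>s), astar A (length xs) (tl \<Gamma>s) \<alpha>]))"
         "phi Q = EApp as \<Gamma>s (act A C xs M (cid A (hd \<Gamma>s)) (ArrM k \<alpha> fs (did A a)) u) vs \<eta>" by blast
    have e: "asP = bs" "dvctx p0 # map dvctx ps = hd \<Gamma>s # map (\<lambda>j. \<Gamma>s ! Suc (\<alpha> ! j)) [0..<length bs]"
      "phi p0 = u"
      "map phi ps = map (\<lambda>j. act A C xs N (cid A (\<Gamma>s ! Suc (\<alpha> ! j))) (fs ! j) (vs ! (\<alpha> ! j))) [0..<length bs]"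
      "\<eta>P = cthen A \<eta> (cmtensor (length xs) [cid A (hd \<Gamma>s), astar A (length xs) (tl \<Gamma>s) \<alpha>])"
      "asQ = as" "dvctx q0 # map dvctx qs = \<Gamma>s" "phi q0 = act A C xs M (cid A (hd \<Gamma>s)) (ArrM k \<alpha> fs (did A a)) u"
      "map phi qs = vs" "\<eta>Q = \<eta>"
      using h(2,3) phiP phiQ by auto
    have sm: "sobj A as" "sobj A bs" "k = length as" "length \<alpha> = length bs" "length fs = length bs" "inC C k \<alpha>"
       "\<forall>i<length bs. \<alpha> ! i < k \<and> dmor A C (fs ! i) (as ! (\<alpha> ! i)) (bs ! i)"
      using h(1) by (auto simp: smor_def')
    have lq: "length qs = length as" using QQ(3) e(6) by simp
    have hdG: "hd \<Gamma>s = dvctx p0" "hd \<Gamma>s = dvctx q0" using e(2,7) by auto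
    have tlG: "tl \<Gamma>s = map dvctx qs" using e(7) by auto
    have GS: "\<Gamma>s ! Suc i = dvctx (qs ! i)" if "i < length qs" for i using e(7) that by auto
    have aj: "\<alpha> ! j < length qs" if "j < length bs" for j using sm that lq by auto
    have mps: "map dvctx ps = map (\<lambda>j. dvctx (qs ! (\<alpha> ! j))) [0..<length bs]"
      using e(2) GS aj by auto
    have ao: "dobj A a" using deriv_objs[OF dP] by simp
    define F where "F = ArrM k \<alpha> fs (did A a)"
    have dF: "dmor A C F (Arr bs a) (Arr as a)"
      unfolding F_def using sm ao ic by (intro dmor_Arr) (auto intro: did_typed)
    have p0d: "deriv A C xs p0 (dvctx p0) M (Arr bs a)" using PP(1) e(1) by simp
    define R where "R = DApp \<Delta> a (lact A F (Arr as a) p0) qs \<eta>"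
    have dR: "deriv A C xs R \<Delta> (App M N) a" unfolding R_def
    proof (rule deriv_App[where \<Gamma>s="map dvctx qs" and as=as])
      show "deriv A C xs (lact A F (Arr as a) p0) (dvctx p0) M (Arr as a)" using lact_typed[OF p0d dF ic] .
      show "\<forall>i<length as. deriv A C xs (qs ! i) (map dvctx qs ! i) N (as ! i)" using QQ(4) e(6) lq by simp
      show "cobj A (length xs) \<Delta>" using PP(5) .
      show "cmor A C \<eta> \<Delta> (ctensor (length xs) (dvctx p0 # map dvctx qs))" using QQ(6) e(10) hdG by simp
    qed (use lq in auto)
    have "phi R = phi Q"
    proof -
      have "phi (lact A F (Arr as a) p0) = act A C xs M (cid A (dvctx p0)) F (phi p0)"
        using phi_lact_cid[OF p0d dF ic] by simp
      then show ?thesis unfolding R_def using h(3) e(3,7,9) hdG F_def by simp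
    qed
    then have RQ: "R = Q" using phi_inj[OF dR dQ] by simp
    define ps' where "ps' = map (\<lambda>j. lact A (fs ! j) (bs ! j) (qs ! (\<alpha> ! j))) [0..<length bs]"
    define L where "L = DApp \<Delta> a p0 ps' (cthen A \<eta> (cmtensor (length xs) [cid A (dvctx p0), astar A (length xs) (map dvctx qs) \<alpha>]))"
    have dqj: "deriv A C xs (qs ! (\<alpha> ! j)) (dvctx (qs ! (\<alpha> ! j))) N (as ! (\<alpha> ! j))" if "j < length bs" for j
      using QQ(4) e(6) aj[OF that] lq by simp
    have dL: "deriv A C xs L \<Delta> (App M N) a" unfolding L_def
    proof (rule deriv_App[where \<Gamma>s="map (\<lambda>j. dvctx (qs ! (\<alpha> ! j))) [0..<length bs]" and as=bs])
      show "deriv A C xs p0 (dvctx p0) M (Arr bs a)" by (rule p0d)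
      show "\<forall>i<length bs. deriv A C xs (ps' ! i) (map (\<lambda>j. dvctx (qs ! (\<alpha> ! j))) [0..<length bs] ! i) N (bs ! i)"
      proof (intro allI impI)
        fix i assume i: "i < length bs"
        show "deriv A C xs (ps' ! i) (map (\<lambda>j. dvctx (qs ! (\<alpha> ! j))) [0..<length bs] ! i) N (bs ! i)"
          using lact_typed[OF dqj[OF i] _ ic, of "fs ! i" "bs ! i"] sm i by (simp add: ps'_def)
      qed
      show "cobj A (length xs) \<Delta>" using PP(5) .
      show "cmor A C (cthen A \<eta> (cmtensor (length xs) [cid A (dvctx p0), astar A (length xs) (map dvctx qs) \<alpha>])) \<Delta>
          (ctensor (length xs) (dvctx p0 # map (\<lambda>j. dvctx (qs ! (\<alpha> ! j))) [0..<length bs]))"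
        using PP(6) e(5) hdG tlG mps by simp
    qed (simp_all add: ps'_def)
    have "phi L = phi P"
    proof -
      have "map phi ps' = map phi ps"
      proof (rule nth_equalityI)
        show "length (map phi ps') = length (map phi ps)" using PP(3) e(1) by (simp add: ps'_def)
        fix j assume j: "j < length (map phi ps')"
        then have j': "j < length bs" by (simp add: ps'_def)
        have "phi (ps' ! j) = act A C xs N (cid A (dvctx (qs ! (\<alpha> ! j)))) (fs ! j) (phi (qs ! (\<alpha> ! j)))"
          using phi_lact_cid[OF dqj[OF j'] _ ic, of "fs ! j" "bs ! j"] sm j' by (simp add: ps'_def)
        also have "\<dots> = map phi ps ! j"
        proof -
          have "vs ! (\<alpha> ! j) = phi (qs ! (\<alpha> ! j))" using e(9) aj[OF j'] by auto
          then show ?thesis using e(4) j' GS aj by simp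
        qed
        finally show "map phi ps' ! j = map phi ps ! j" using j' by (simp add: ps'_def)
      qed
      moreover have "map dvctx ps' = map dvctx ps" using mps by (simp add: ps'_def)
      ultimately show ?thesis unfolding L_def using P PP(2) e(1,5) hdG tlG by simp
    qed
    then have LP: "L = P" using phi_inj[OF dL dP] by simp
    have "dcong A C xs (App M N) L R"
    proof (rule dcong_i[OF h(1)])
      show "L = DApp \<Delta> a p0 (map (\<lambda>j. lact A (fs ! j) (bs ! j) (qs ! (\<alpha> ! j))) [0..<length bs])
          (cthen A \<eta> (cmtensor (length xs) [cid A (dvctx p0), astar A (length xs) (map dvctx qs) \<alpha>]))"
        by (simp add: L_def ps'_def)
      show "R = DApp \<Delta> a (lact A (ArrM k \<alpha> fs (did A a)) (Arr as a) p0) qs \<eta>" by (simp add: R_def F_def)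
    qed (use dL dR in auto)
    then show ?thesis using LP RQ by simp
  qed
qed

lemma rel_dcong: "FV M \<subseteq> set xs \<Longrightarrow> is_cat A \<Longrightarrow> deriv A C xs p \<Delta> M a \<Longrightarrow> deriv A C xs q \<Delta> M a \<Longrightarrow>
   (phi p, phi q) \<in> rel A C xs M \<Delta> a \<Longrightarrow> dcong A C xs M p q"
proof (induction M arbitrary: xs \<Delta> a p q)
  case (Var x)
  then have "phi p = phi q" by (auto simp: rel_Var)
  then have "p = q" using phi_inj Var.prems(3,4) by blast
  then show ?case using dcong_refl Var.prems(3) by metis
next
  case (Lam x M)
  from Lam.prems(3) obtain as b p' where p: "a = Arr as b" "p = DAbs \<Delta> (Arr as b) p'" "deriv A C (xs @ [x]) p' (\<Delta> @ [as]) M b"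
    by (rule derivE_Lam) auto
  from Lam.prems(4) obtain q' where q: "q = DAbs \<Delta> (Arr as b) q'" "deriv A C (xs @ [x]) q' (\<Delta> @ [as]) M b"
    by (rule derivE_Lam) (use p in auto)
  have "(phi p', phi q') \<in> rel A C (xs @ [x]) M (\<Delta> @ [as]) b" using Lam.prems(5) p q by (simp add: rel_Lam)
  moreover have "FV M \<subseteq> set (xs @ [x])" using Lam.prems(1) by auto
  ultimately have "dcong A C (xs @ [x]) M p' q'" using Lam.IH Lam.prems(2) p(3) q(2) by blast
  then show ?case using dcong_Abs Lam.prems(3,4) p q by metis
next
  case (App M N)
  note ic = App.prems(2) and dp = App.prems(3) and dq = App.prems(4)
  have IHM: "\<And>\<Gamma> b p q. deriv A C xs p \<Gamma> M b \<Longrightarrow> deriv A C xs q \<Gamma> M b \<Longrightarrow> (phi p, phi q) \<in> rel A C xs M \<Gamma> b \<Longrightarrow> dcong A C xs M p q"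
    using App.IH(1) App.prems(1) ic by auto
  have IHN: "\<And>\<Gamma> b p q. deriv A C xs p \<Gamma> N b \<Longrightarrow> deriv A C xs q \<Gamma> N b \<Longrightarrow> (phi p, phi q) \<in> rel A C xs N \<Gamma> b \<Longrightarrow> dcong A C xs N p q"
    using App.IH(2) App.prems(1) ic by auto
  let ?G = "appgen A C (length xs) (car A C xs M) (rel A C xs M) (act A C xs M) (car A C xs N) (rel A C xs N) (act A C xs N) \<Delta> a"
  have ob: "cobj A (length xs) \<Delta>" "dobj A a" using deriv_objs[OF dp] by auto
  have rt: "(phi p, phi q) \<in> (?G \<union> ?G\<inverse>)\<^sup>*" using App.prems(5) by (simp add: rel_App)
  have "\<exists>Q. deriv A C xs Q \<Delta> (App M N) a \<and> phi Q = e' \<and> dcong A C xs (App M N) p Q"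
    if "(phi p, e') \<in> (?G \<union> ?G\<inverse>)\<^sup>*" for e'
    using that
  proof (induction rule: rtrancl_induct)
    case base
    then show ?case using dp dcong_refl by blast
  next
    case (step y z)
    then obtain Qy where Qy: "deriv A C xs Qy \<Delta> (App M N) a" "phi Qy = y" "dcong A C xs (App M N) p Qy" by blast
    have "z \<in> car A C xs (App M N) \<Delta> a" using step.hyps(2) appgen_sub[of A C "length xs" "car A C xs M" "rel A C xs M" "act A C xs M" "car A C xs N" "rel A C xs N" "act A C xs N" \<Delta> a]
      unfolding car_App by blast
    then obtain Qz where Qz: "deriv A C xs Qz \<Delta> (App M N) a" "phi Qz = z"
      using car_phi[OF App.prems(1) ob] by blast
    have "dcong A C xs (App M N) Qy Qz"
      using step.hyps(2)
    proof
      assume "(y, z) \<in> ?G"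
      then show ?thesis using gen_dcong[OF ic IHM IHN Qy(1) Qz(1)] Qy(2) Qz(2) by simp
    next
      assume "(y, z) \<in> ?G\<inverse>"
      then have "dcong A C xs (App M N) Qz Qy" using gen_dcong[OF ic IHM IHN Qz(1) Qy(1)] Qy(2) Qz(2) by simp
      then show ?thesis by (rule dcong_sym)
    qed
    then show ?case using Qz Qy(3) dcong_trans by blast
  qed
  then obtain Q where "deriv A C xs Q \<Delta> (App M N) a" "phi Q = phi q" "dcong A C xs (App M N) p Q" using rt by blast
  then show ?case using phi_inj[OF _ dq] by metis
qed

lemma DQ_eq: "DQ A C xs M \<Delta> a = car A C xs M \<Delta> a // rel A C xs M \<Delta> a"
  by (simp add: DQ_def car_def rel_def)
lemma DQact_eq: "DQact A C xs M \<Delta>' a' \<eta> f X = (\<Union>e\<in>X. rel A C xs M \<Delta>' a' `` {act A C xs M \<eta> f e})"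
  by (simp add: DQact_def rel_def act_def)

lemma Phi_class:
  assumes "FV M \<subseteq> set xs" "is_cat A" "deriv A C xs p \<Delta> M a"
  shows "{q. deriv A C xs q \<Delta> M a \<and> phi q \<in> rel A C xs M \<Delta> a `` {phi p}} = {q. dcong A C xs M p q}"
proof (intro set_eqI iffI; simp)
  fix q assume "deriv A C xs q \<Delta> M a \<and> (phi p, phi q) \<in> rel A C xs M \<Delta> a"
  then show "dcong A C xs M p q" using rel_dcong assms by blast
next
  fix q assume d: "dcong A C xs M p q"
  have "(phi p, phi q) \<in> rel A C xs M (dvctx p) (dvty p)" using dcong_rel[OF d assms(2)] .
  moreover have "dvctx p = \<Delta>" "dvty p = a" using deriv_det assms(3) by blast+
  moreover have "deriv A C xs q \<Delta> M a" using dcong_typed[OF d] assms(3) deriv_det by metis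
  ultimately show "deriv A C xs q \<Delta> M a \<and> (phi p, phi q) \<in> rel A C xs M \<Delta> a" by simp
qed

theorem theorem3:
  fixes A :: "('o,'m) cat" and C :: cls and M :: "'v lterm" and xs :: "'v list"
  assumes "is_cat A" and "distinct xs" and "FV M \<subseteq> set xs"
  shows "\<exists>\<Phi>.
    (\<forall>\<Delta> a. cobj A (length xs) \<Delta> \<longrightarrow> dobj A a \<longrightarrow>
        bij_betw (\<Phi> \<Delta> a) (DQ A C xs M \<Delta> a) (TQ A C xs M \<Delta> a)) \<and>
    (\<forall>\<Delta> \<Delta>' a a' \<eta> f. cobj A (length xs) \<Delta> \<longrightarrow> cobj A (length xs) \<Delta>' \<longrightarrow> dobj A a \<longrightarrow> dobj A a' \<longrightarrow>
        cmor A C \<eta> \<Delta>' \<Delta> \<longrightarrow> dmor A C f a a' \<longrightarrow>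
        (\<forall>X\<in>DQ A C xs M \<Delta> a.
           \<Phi> \<Delta>' a' (DQact A C xs M \<Delta>' a' \<eta> f X) = TQact A C xs M \<Delta>' a' \<eta> f (\<Phi> \<Delta> a X)))"
proof -
  note ic = assms(1) and fv = assms(3)
  define \<Phi> where "\<Phi> = (\<lambda>\<Delta> a X. {p. deriv A C xs p \<Delta> M a \<and> phi p \<in> X})"
  have cls: "\<exists>p. deriv A C xs p \<Delta> M a \<and> X = rel A C xs M \<Delta> a `` {phi p}"
    if o12: "cobj A (length xs) \<Delta>" "dobj A a" and XQ: "X \<in> DQ A C xs M \<Delta> a" for \<Delta> a X
  proof -
    from XQ obtain e where e: "e \<in> car A C xs M \<Delta> a" "X = rel A C xs M \<Delta> a `` {e}"
      unfolding DQ_eq by (auto elim: quotientE)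
    then obtain p where "deriv A C xs p \<Delta> M a" "phi p = e" using car_phi[OF fv o12] by blast
    then show ?thesis using e by blast
  qed
  have PhiX: "\<Phi> \<Delta> a (rel A C xs M \<Delta> a `` {phi p}) = {q. dcong A C xs M p q}"
    if "deriv A C xs p \<Delta> M a" for p \<Delta> a
    unfolding \<Phi>_def using Phi_class[OF fv ic that] .
  have TQ_eq: "TQ A C xs M \<Delta> a = {{q. dcong A C xs M p q} | p. deriv A C xs p \<Delta> M a}" for \<Delta> a
    unfolding TQ_def quotient_def by auto
  show ?thesis
  proof (intro exI[of _ \<Phi>] conjI allI impI ballI)
    fix \<Delta> a assume o: "cobj A (length xs) \<Delta>" "dobj A a"
    show "bij_betw (\<Phi> \<Delta> a) (DQ A C xs M \<Delta> a) (TQ A C xs M \<Delta> a)"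
      unfolding bij_betw_def
    proof (intro conjI)
      show "inj_on (\<Phi> \<Delta> a) (DQ A C xs M \<Delta> a)"
      proof (rule inj_onI)
        fix X Y assume X: "X \<in> DQ A C xs M \<Delta> a" and Y: "Y \<in> DQ A C xs M \<Delta> a" and eq: "\<Phi> \<Delta> a X = \<Phi> \<Delta> a Y"
        obtain p where p: "deriv A C xs p \<Delta> M a" "X = rel A C xs M \<Delta> a `` {phi p}" using cls[OF o X] by blast
        obtain p' where p': "deriv A C xs p' \<Delta> M a" "Y = rel A C xs M \<Delta> a `` {phi p'}" using cls[OF o Y] by blast
        have "{q. dcong A C xs M p q} = {q. dcong A C xs M p' q}" using eq p p' PhiX by metis
        moreover have "dcong A C xs M p p" using dcong_refl p(1) by metis
        ultimately have "dcong A C xs M p' p" by blast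
        then have "(phi p', phi p) \<in> rel A C xs M \<Delta> a" using dcong_rel[of A C xs M p' p] ic p'(1) deriv_det by metis
        then show "X = Y" using p(2) p'(2) equiv_class_eq[OF sem_equiv] by metis
      qed
      show "\<Phi> \<Delta> a ` DQ A C xs M \<Delta> a = TQ A C xs M \<Delta> a"
      proof (intro set_eqI iffI)
        fix Z assume "Z \<in> \<Phi> \<Delta> a ` DQ A C xs M \<Delta> a"
        then obtain X where X: "X \<in> DQ A C xs M \<Delta> a" "Z = \<Phi> \<Delta> a X" by blast
        obtain p where p: "deriv A C xs p \<Delta> M a" "X = rel A C xs M \<Delta> a `` {phi p}" using cls[OF o X(1)] by blast
        show "Z \<in> TQ A C xs M \<Delta> a" using X(2) p PhiX[OF p(1)] TQ_eq by auto
      next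
        fix Z assume "Z \<in> TQ A C xs M \<Delta> a"
        then obtain p where p: "deriv A C xs p \<Delta> M a" "Z = {q. dcong A C xs M p q}" using TQ_eq by auto
        have "rel A C xs M \<Delta> a `` {phi p} \<in> DQ A C xs M \<Delta> a"
          unfolding DQ_eq using phi_car[OF p(1)] by (auto intro: quotientI)
        then show "Z \<in> \<Phi> \<Delta> a ` DQ A C xs M \<Delta> a" using PhiX[OF p(1)] p(2) by force
      qed
    qed
  next
    fix \<Delta> \<Delta>' a a' \<eta> f X
    assume o: "cobj A (length xs) \<Delta>" "cobj A (length xs) \<Delta>'" "dobj A a" "dobj A a'"
      and cm: "cmor A C \<eta> \<Delta>' \<Delta>" and df: "dmor A C f a a'" and X: "X \<in> DQ A C xs M \<Delta> a"
    have Xc: "X \<subseteq> car A C xs M \<Delta> a"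
      using X sem_equiv unfolding DQ_eq by (metis Union_upper equiv_def Union_quotient)
    let ?L = "\<lambda>p. lact A f a' (ract A \<Delta>' \<eta> p)"
    have dL: "deriv A C xs (?L p) \<Delta>' M a'" if "deriv A C xs p \<Delta> M a" for p
      using lact_typed[OF ract_typed[OF that cm ic] df ic] .
    show "\<Phi> \<Delta>' a' (DQact A C xs M \<Delta>' a' \<eta> f X) = TQact A C xs M \<Delta>' a' \<eta> f (\<Phi> \<Delta> a X)"
    proof (intro set_eqI iffI)
      fix q assume "q \<in> \<Phi> \<Delta>' a' (DQact A C xs M \<Delta>' a' \<eta> f X)"
      then obtain e where q: "deriv A C xs q \<Delta>' M a'" "e \<in> X" "(act A C xs M \<eta> f e, phi q) \<in> rel A C xs M \<Delta>' a'"
        unfolding \<Phi>_def DQact_eq by auto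
      obtain p where p: "deriv A C xs p \<Delta> M a" "phi p = e" using car_phi[OF fv o(1,3)] Xc q(2) by blast
      have "act A C xs M \<eta> f e = phi (?L p)" using phi_act[OF p(1) cm df ic] p(2) by simp
      then have "dcong A C xs M (?L p) q" using rel_dcong[OF fv ic dL[OF p(1)] q(1)] q(3) by simp
      moreover have "p \<in> \<Phi> \<Delta> a X" unfolding \<Phi>_def using p q(2) by simp
      ultimately show "q \<in> TQact A C xs M \<Delta>' a' \<eta> f (\<Phi> \<Delta> a X)" unfolding TQact_def by blast
    next
      fix q assume "q \<in> TQact A C xs M \<Delta>' a' \<eta> f (\<Phi> \<Delta> a X)"
      then obtain p where p: "deriv A C xs p \<Delta> M a" "phi p \<in> X" "dcong A C xs M (?L p) q"
        unfolding TQact_def \<Phi>_def by blast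
      have r: "(phi (?L p), phi q) \<in> rel A C xs M \<Delta>' a'"
        using dcong_rel[OF p(3) ic] deriv_det[OF dL[OF p(1)]] by simp
      have dq: "deriv A C xs q \<Delta>' M a'" using dcong_typed[OF p(3)] dL[OF p(1)] deriv_det by metis
      have "act A C xs M \<eta> f (phi p) = phi (?L p)" using phi_act[OF p(1) cm df ic] by simp
      then show "q \<in> \<Phi> \<Delta>' a' (DQact A C xs M \<Delta>' a' \<eta> f X)"
        unfolding \<Phi>_def DQact_eq using dq r p(2) by (intro CollectI conjI UN_I[of "phi p"]) auto
    qed
  qed
qed

end
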